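(* Let $m=rn$ with $r$ an integer satisfying $2\leq r\leq e^{n^{0.1}}$ ($r$ may depend on $n$). Let the utilities $u_i(j)$ ($i\in[n]$, $j\in[m]$) be drawn independently from a distribution $\mathcal{U}$ on $[0,1]$ that is $(\underline{\theta},q)$-polynomially bounded below at 1 and $(\overline{\theta},q)$-polynomially bounded above at 1, for constants $\underline{\theta},\overline{\theta},q>0$, and let $\tau:=1-\left(\frac{64\log m}{\underline{\theta}n}\right)^{1/q}$. Let $E_{\geq\tau}=\{(i,j)\in N\times M: u_i(j)\geq\tau\}$ and let $E^*_{\geq\tau}$ be the edge set produced by ThresholdMatchingWithRemoval$_\tau$ (see context). Then, with high probability, the bipartite graph $(N,M,E_{\geq\tau}\setminus E^*_{\geq\tau})$ has maximum degree at most 2.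
   Context: Agents are $N=[n]$, items $M=[m]$. A distribution $\mathcal{U}$ on $[0,1]$ is $(\theta,q)$-polynomially bounded below (resp. above) at 1 if for all $\alpha\in(0,1]$, $\Pr_{u\sim\mathcal{U}}[u>1-\alpha]\geq\theta\alpha^q$ (resp. $\leq\theta\alpha^q$). For a finite multiset $S$ of reals, sum-top$_r(S)$ is the sum of its $r$ largest elements (or of all elements if $|S|<r$). Procedure ThresholdMatchingWithRemoval$_\tau$: for each agent $i=1,\dots,n$, set $M^*_{\geq\tau}(i)\leftarrow\{j\in M: u_i(j)\geq\tau\}$; then for each $i'\in N\setminus\{i\}$ in turn, while sum-top$_r(\{u_{i'}(j): j\in M^*_{\geq\tau}(i)\})>r\tau$ (as a multiset), remove from $M^*_{\geq\tau}(i)$ the item(s) $j\in M^*_{\geq\tau}(i)$ maximizing $u_{i'}(j)$. Then $E^*_{\geq\tau}=\{(i,j): j\in M^*_{\geq\tau}(i)\text{ at the end}\}$. $\log$ is natural. "With high probability" means with probability tending to 1 as $n\to\infty$. *)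

theory Defs
  imports "HOL-Probability.Probability"
begin

text \<open>Agents are 0..<n, items 0..<m. A utility profile is u :: nat \<Rightarrow> nat \<Rightarrow> real,
  u i j = utility of agent i for item j.\<close>

definition poly_bounded_below :: "real measure \<Rightarrow> real \<Rightarrow> real \<Rightarrow> bool" where
  "poly_bounded_below U \<theta> q \<longleftrightarrow>
     (\<forall>\<alpha>. 0 < \<alpha> \<and> \<alpha> \<le> 1 \<longrightarrow> measure U {1 - \<alpha><..} \<ge> \<theta> * \<alpha> powr q)"

definition poly_bounded_above :: "real measure \<Rightarrow> real \<Rightarrow> real \<Rightarrow> bool" where
  "poly_bounded_above U \<theta> q \<longleftrightarrow>
     (\<forall>\<alpha>. 0 < \<alpha> \<and> \<alpha> \<le> 1 \<longrightarrow> measure U {1 - \<alpha><..} \<le> \<theta> * \<alpha> powr q)"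

definition sum_top :: "nat \<Rightarrow> (nat \<Rightarrow> real) \<Rightarrow> nat set \<Rightarrow> real" where
  "sum_top r f S = sum_list (take r (rev (sort (map f (sorted_list_of_set S)))))"

definition removal_step :: "nat \<Rightarrow> real \<Rightarrow> (nat \<Rightarrow> real) \<Rightarrow> nat set \<Rightarrow> nat set" where
  "removal_step r \<tau> f S =
     (if S \<noteq> {} \<and> sum_top r f S > real r * \<tau>
      then S - {j \<in> S. f j = Max (f ` S)} else S)"

text \<open>The while loop; each effective step removes at least one item, so after card S
  iterations the loop has terminated.\<close>
definition removal_loop :: "nat \<Rightarrow> real \<Rightarrow> (nat \<Rightarrow> real) \<Rightarrow> nat set \<Rightarrow> nat set" where
  "removal_loop r \<tau> f S = (removal_step r \<tau> f ^^ card S) S"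

definition M_star :: "nat \<Rightarrow> nat \<Rightarrow> nat \<Rightarrow> real \<Rightarrow> (nat \<Rightarrow> nat \<Rightarrow> real) \<Rightarrow> nat \<Rightarrow> nat set" where
  "M_star n m r \<tau> u i =
     foldl (\<lambda>S i'. removal_loop r \<tau> (u i') S)
           {j. j < m \<and> u i j \<ge> \<tau>}
           (filter (\<lambda>i'. i' \<noteq> i) [0..<n])"

definition E_ge :: "nat \<Rightarrow> nat \<Rightarrow> real \<Rightarrow> (nat \<Rightarrow> nat \<Rightarrow> real) \<Rightarrow> (nat \<times> nat) set" where
  "E_ge n m \<tau> u = {(i, j). i < n \<and> j < m \<and> u i j \<ge> \<tau>}"

definition E_star :: "nat \<Rightarrow> nat \<Rightarrow> nat \<Rightarrow> real \<Rightarrow> (nat \<Rightarrow> nat \<Rightarrow> real) \<Rightarrow> (nat \<times> nat) set" where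
  "E_star n m r \<tau> u = {(i, j). i < n \<and> j \<in> M_star n m r \<tau> u i}"

definition max_degree_le :: "nat \<Rightarrow> nat \<Rightarrow> (nat \<times> nat) set \<Rightarrow> nat \<Rightarrow> bool" where
  "max_degree_le n m D k \<longleftrightarrow>
     (\<forall>i<n. card {j. j < m \<and> (i, j) \<in> D} \<le> k) \<and>
     (\<forall>j<m. card {i. i < n \<and> (i, j) \<in> D} \<le> k)"

end

theory Submission
  imports Defs
begin

definition kk :: "nat \<Rightarrow> nat" where
  "kk r = (if r \<le> 3 then 2 else max 3 (r div 4 + 1))"

lemma sum_list_if_count:
  fixes a c :: real
  shows "sum_list (map (\<lambda>y. if P y then a else c) ys)
     = a * real (length (filter P ys)) + c * real (length (filter (\<lambda>y. \<not> P y) ys))"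
  by (induction ys) (auto simp: algebra_simps)

lemma sum_list_le_map:
  fixes ys :: "real list"
  shows "(\<forall>y\<in>set ys. y \<le> g y) \<Longrightarrow> sum_list ys \<le> sum_list (map g ys)"
  by (induction ys) (auto intro: add_mono)

lemma length_filter_take_le: "length (filter P (take r L)) \<le> length (filter P L)"
proof -
  have "filter P L = filter P (take r L) @ filter P (drop r L)"
    by (metis append_take_drop_id filter_append)
  then show ?thesis by (metis le_add1 length_append)
qed

lemma trigger:
  fixes f :: "nat \<Rightarrow> real" and S :: "nat set" and \<alpha> :: real
  assumes fin: "finite S" and ne: "S \<noteq> {}" and le1: "\<forall>j\<in>S. f j \<le> 1"
    and a0: "0 < \<alpha>" and a1: "\<alpha> \<le> 1/16" and r2: "r \<ge> 2"
    and st: "sum_top r f S > real r * (1 - \<alpha>)"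
  shows "Max (f ` S) > 1 - \<alpha>" and "kk r \<le> card {j\<in>S. f j > 1 - 2*\<alpha>}"
proof -
  define xs where "xs = sorted_list_of_set S"
  define L where "L = rev (sort (map f xs))"
  define ys where "ys = take r L"
  define h where "h = 1 - 2*\<alpha>"
  have dxs: "distinct xs" and sxs: "set xs = S" using fin by (auto simp: xs_def)
  have msetL: "mset L = mset (map f xs)" by (simp add: L_def)
  have setL: "set L = f ` S" using sxs by (simp add: L_def)
  have lenL: "length L = card S" using fin by (simp add: L_def xs_def)
  have st': "sum_list ys > real r * (1 - \<alpha>)" using st by (simp add: sum_top_def ys_def L_def xs_def)
  have setys: "set ys \<subseteq> f ` S" using setL by (metis ys_def set_take_subset)
  define t where "t = length ys"
  have tr: "t \<le> r" by (simp add: t_def ys_def)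
  have ys1: "\<forall>y\<in>set ys. y \<le> 1" using setys le1 by auto
  have fS: "finite (f ` S)" "f ` S \<noteq> {}" using fin ne by auto
  have "sum_list ys \<le> sum_list (map (\<lambda>_. Max (f ` S)) ys)"
    by (rule sum_list_le_map) (use setys fS in auto)
  also have "\<dots> = real t * Max (f ` S)" by (simp add: t_def sum_list_triv)
  finally have sMax: "sum_list ys \<le> real t * Max (f ` S)" .
  show "Max (f ` S) > 1 - \<alpha>"
  proof (rule ccontr)
    assume "\<not> ?thesis"
    then have "Max (f ` S) \<le> 1 - \<alpha>" by simp
    then have "real t * Max (f ` S) \<le> real t * (1 - \<alpha>)" by (simp add: mult_left_mono)
    also have "\<dots> \<le> real r * (1 - \<alpha>)" using tr a1 by (simp add: mult_right_mono)
    finally show False using sMax st' by linarith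
  qed
  define b where "b = length (filter (\<lambda>y. y > h) ys)"
  define c where "c = length (filter (\<lambda>y. \<not> y > h) ys)"
  have bc: "b + c = t" unfolding b_def c_def t_def by (rule sum_length_filter_compl)
  have "sum_list ys \<le> sum_list (map (\<lambda>y. if y > h then 1 else h) ys)"
    by (rule sum_list_le_map) (use ys1 in auto)
  also have "\<dots> = real b + h * real c" by (simp add: sum_list_if_count b_def c_def)
  finally have sb: "sum_list ys \<le> real b + h * real c" .
  have "b \<le> length (filter (\<lambda>y. y > h) L)" unfolding b_def ys_def by (rule length_filter_take_le)
  also have "\<dots> = length (filter (\<lambda>y. y > h) (map f xs))"
    by (metis msetL mset_filter size_mset)
  also have "\<dots> = length (filter (\<lambda>j. f j > h) xs)" by (simp add: filter_map o_def)
  also have "\<dots> = card {j\<in>S. f j > h}"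
    using dxs sxs by (metis distinct_card distinct_filter set_filter)
  finally have bcard: "b \<le> card {j\<in>S. f j > h}" .
  have key1: "real r - real r * \<alpha> < real b + real c - 2 * \<alpha> * real c"
    using st' sb by (simp add: h_def algebra_simps)
  have rt: "real b + real c \<le> real r" using bc tr by linarith
  have ca: "0 \<le> \<alpha> * real c" using a0 by simp
  have c2: "2 * real c < real r"
  proof -
    have "2 * \<alpha> * real c < real r * \<alpha>" using key1 rt by linarith
    then have "\<alpha> * (2 * real c) < \<alpha> * real r" by (simp add: algebra_simps)
    then show ?thesis using a0 by simp
  qed
  have bct: "real r - real r * \<alpha> < real b + real c" using key1 ca by linarith
  have ra: "real r * \<alpha> \<le> real r / 16" using mult_left_mono[OF a1, of "real r"] by simp
  have "kk r \<le> b"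
  proof (cases "r \<le> 15")
    case True
    then have "real r \<le> 15" by simp
    then have "real r * \<alpha> < 1" using ra by linarith
    then have "real r < real b + real c + 1" using bct by linarith
    then have "r \<le> b + c" by linarith
    then have "b + c = r" using bc tr by linarith
    moreover have "2 * c < r" using c2 by linarith
    ultimately show ?thesis using r2 unfolding kk_def by auto
  next
    case False
    have "real r - real r / 16 < real b + real c" using bct ra by linarith
    then have "7 * real r < 16 * real b" using c2 by linarith
    then have "7 * r < 16 * b" by linarith
    then show ?thesis using False unfolding kk_def by auto
  qed
  then show "kk r \<le> card {j\<in>S. f j > 1 - 2*\<alpha>}" using bcard h_def by simp
qed

lemma removal_step_sub: "removal_step r \<tau> f S \<subseteq> S"
  by (auto simp: removal_step_def)

lemma removal_step_removed:
  fixes r :: nat and \<tau> :: real and f :: "nat \<Rightarrow> real"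
  assumes "j \<in> S - removal_step r \<tau> f S"
  shows "S \<noteq> {} \<and> sum_top r f S > real r * \<tau> \<and> f j = Max (f ` S)"
  using assms by (auto simp: removal_step_def split: if_splits)

lemma iter_sub: "(removal_step r \<tau> f ^^ k) S \<subseteq> S"
  by (induction k) (use removal_step_sub in fastforce)+

lemma iter_removed:
  fixes r :: nat and \<tau> :: real and f :: "nat \<Rightarrow> real" and S :: "nat set"
  assumes "j \<in> S - (removal_step r \<tau> f ^^ k) S"
  shows "\<exists>S'\<subseteq>S. j \<in> S' - removal_step r \<tau> f S'"
  using assms
proof (induction k)
  case 0 then show ?case by simp
next
  case (Suc k)
  show ?case
  proof (cases "j \<in> (removal_step r \<tau> f ^^ k) S")
    case True
    then show ?thesis using Suc.prems iter_sub[where r=r and \<tau>=\<tau> and f=f and k=k and S=S] by auto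
  next
    case False
    then show ?thesis using Suc by auto
  qed
qed

lemma loop_sub: "removal_loop r \<tau> f S \<subseteq> S"
  by (simp add: removal_loop_def iter_sub)

lemma loop_removed:
  "j \<in> S - removal_loop r \<tau> f S \<Longrightarrow> \<exists>S'\<subseteq>S. j \<in> S' - removal_step r \<tau> f S'"
  unfolding removal_loop_def by (rule iter_removed)

lemma foldl_sub: "foldl (\<lambda>S i'. removal_loop r \<tau> (u i') S) S0 L \<subseteq> S0"
proof (induction L arbitrary: S0)
  case Nil then show ?case by simp
next
  case (Cons a L)
  then show ?case using loop_sub by (simp, blast)
qed

lemma foldl_removed:
  "j \<in> S0 - foldl (\<lambda>S i'. removal_loop r \<tau> (u i') S) S0 L \<Longrightarrow>
   \<exists>i'\<in>set L. \<exists>S'\<subseteq>S0. j \<in> S' - removal_step r \<tau> (u i') S'"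
proof (induction L arbitrary: S0)
  case Nil then show ?case by simp
next
  case (Cons a L)
  let ?S1 = "removal_loop r \<tau> (u a) S0"
  show ?case
  proof (cases "j \<in> ?S1")
    case True
    then have "j \<in> ?S1 - foldl (\<lambda>S i'. removal_loop r \<tau> (u i') S) ?S1 L" using Cons.prems by simp
    from Cons.IH[OF this] obtain i' S' where "i' \<in> set L" "S' \<subseteq> ?S1" "j \<in> S' - removal_step r \<tau> (u i') S'"
      by blast
    then show ?thesis using loop_sub[where r=r and \<tau>=\<tau> and f="u a" and S=S0] by auto
  next
    case False
    then have "j \<in> S0 - ?S1" using Cons.prems by simp
    from loop_removed[OF this] show ?thesis by auto
  qed
qed

definition Bs :: "(nat \<times> nat \<Rightarrow> real) \<Rightarrow> nat \<Rightarrow> real \<Rightarrow> nat \<Rightarrow> nat \<Rightarrow> nat set" where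
  "Bs \<omega> m h x y = {j. j < m \<and> \<omega> (x, j) > h \<and> \<omega> (y, j) > h}"

lemma removed_in_B:
  fixes \<omega> :: "nat \<times> nat \<Rightarrow> real"
  assumes le1: "\<forall>i<n. \<forall>j<m. \<omega> (i, j) \<le> 1"
    and a0: "0 < \<alpha>" and a1: "\<alpha> \<le> 1/16" and r2: "r \<ge> 2"
    and i: "i < n"
    and j: "j \<in> {j. j < m \<and> \<omega> (i, j) \<ge> 1 - \<alpha>} - M_star n m r (1 - \<alpha>) (\<lambda>i j. \<omega> (i, j)) i"
  shows "\<exists>p<n. p \<noteq> i \<and> j \<in> Bs \<omega> m (1 - 2*\<alpha>) i p \<and> kk r \<le> card (Bs \<omega> m (1 - 2*\<alpha>) i p)"
proof -
  let ?A = "{j. j < m \<and> \<omega> (i, j) \<ge> 1 - \<alpha>}"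
  let ?u = "\<lambda>i j. \<omega> (i, j)"
  from foldl_removed[of j ?A r "1 - \<alpha>" ?u] j
  obtain p S' where p: "p \<in> set (filter (\<lambda>i'. i' \<noteq> i) [0..<n])" and S': "S' \<subseteq> ?A"
    and jS: "j \<in> S' - removal_step r (1 - \<alpha>) (?u p) S'"
    unfolding M_star_def by blast
  have pn: "p < n" "p \<noteq> i" using p by auto
  from removal_step_removed[OF jS] have ne: "S' \<noteq> {}" and st: "sum_top r (?u p) S' > real r * (1 - \<alpha>)"
    and mx: "?u p j = Max (?u p ` S')" by auto
  have finS: "finite S'" using S' by (rule finite_subset) auto
  have le1': "\<forall>j\<in>S'. ?u p j \<le> 1" using S' le1 pn by auto
  note tr = trigger[OF finS ne le1' a0 a1 r2 st]
  have "j \<in> Bs \<omega> m (1 - 2*\<alpha>) i p"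
    using jS S' tr(1) mx a0 by (auto simp: Bs_def)
  moreover have "kk r \<le> card (Bs \<omega> m (1 - 2*\<alpha>) i p)"
  proof -
    have "{j\<in>S'. ?u p j > 1 - 2*\<alpha>} \<subseteq> Bs \<omega> m (1 - 2*\<alpha>) i p"
      using S' a0 by (auto simp: Bs_def)
    moreover have "finite (Bs \<omega> m (1 - 2*\<alpha>) i p)" by (simp add: Bs_def)
    ultimately show ?thesis using tr(2) card_mono le_trans by blast
  qed
  ultimately show ?thesis using pn by blast
qed

definition k0 :: "nat \<Rightarrow> nat" where "k0 r = max 3 (r div 4 + 1)"

definition F0 :: "nat \<Rightarrow> nat \<Rightarrow> real \<Rightarrow> nat \<Rightarrow> (nat \<times> nat \<Rightarrow> real) \<Rightarrow> bool" where
  "F0 n m h k \<omega> \<longleftrightarrow> (\<exists>x<n. \<exists>y<n. x \<noteq> y \<and> k \<le> card (Bs \<omega> m h x y))"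

definition F1 :: "nat \<Rightarrow> nat \<Rightarrow> real \<Rightarrow> (nat \<times> nat \<Rightarrow> real) \<Rightarrow> bool" where
  "F1 n m h \<omega> \<longleftrightarrow> (\<exists>x y z a b. x<n \<and> y<n \<and> z<n \<and> a<m \<and> b<m \<and> distinct [x,y,z] \<and> a \<noteq> b \<and>
      (\<forall>c\<in>{x,y,z}\<times>{a,b}. \<omega> c > h))"

definition F2 :: "nat \<Rightarrow> nat \<Rightarrow> real \<Rightarrow> (nat \<times> nat \<Rightarrow> real) \<Rightarrow> bool" where
  "F2 n m h \<omega> \<longleftrightarrow> (\<exists>x y z a b c. x<n \<and> y<n \<and> z<n \<and> a<m \<and> b<m \<and> c<m \<and> distinct [x,y,z] \<and> distinct [a,b,c] \<and>
      (\<forall>p\<in>{x,y,z}\<times>{a} \<union> {x,y}\<times>{b} \<union> {x,z}\<times>{c}. \<omega> p > h))"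

definition F3 :: "nat \<Rightarrow> nat \<Rightarrow> real \<Rightarrow> (nat \<times> nat \<Rightarrow> real) \<Rightarrow> bool" where
  "F3 n m h \<omega> \<longleftrightarrow> (\<exists>x y z a b c d. x<n \<and> y<n \<and> z<n \<and> a<m \<and> b<m \<and> c<m \<and> d<m \<and> distinct [x,y,z] \<and> distinct [a,b,c,d] \<and>
      (\<forall>p\<in>{x,y}\<times>{a,b} \<union> {x,z}\<times>{c,d}. \<omega> p > h))"

definition F4 :: "nat \<Rightarrow> nat \<Rightarrow> real \<Rightarrow> (nat \<times> nat \<Rightarrow> real) \<Rightarrow> bool" where
  "F4 n m h \<omega> \<longleftrightarrow> (\<exists>w x y z a b c. w<n \<and> x<n \<and> y<n \<and> z<n \<and> a<m \<and> b<m \<and> c<m \<and> distinct [w,x,y,z] \<and> distinct [a,b,c] \<and>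
      (\<forall>p\<in>{w,x,y,z}\<times>{a} \<union> {w,x}\<times>{b} \<union> {y,z}\<times>{c}. \<omega> p > h))"

definition F5 :: "nat \<Rightarrow> nat \<Rightarrow> real \<Rightarrow> (nat \<times> nat \<Rightarrow> real) \<Rightarrow> bool" where
  "F5 n m h \<omega> \<longleftrightarrow> (\<exists>w x y z a b. w<n \<and> x<n \<and> y<n \<and> z<n \<and> a<m \<and> b<m \<and> distinct [w,x,y,z] \<and> a \<noteq> b \<and>
      (\<forall>p\<in>{w,x,y,z}\<times>{a,b}. \<omega> p > h))"

lemma two_elems:
  assumes "2 \<le> card A"
  obtains a b where "a \<in> A" "b \<in> A" "a \<noteq> b"
proof -
  obtain B where "B \<subseteq> A" "card B = 2"
    using assms obtain_subset_with_card_n by metis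
  then show ?thesis using that by (auto simp: card_2_iff)
qed

lemma three_elems:
  assumes "3 \<le> card A"
  obtains a b c where "a \<in> A" "b \<in> A" "c \<in> A" "a \<noteq> b" "a \<noteq> c" "b \<noteq> c"
proof -
  obtain B where "B \<subseteq> A" "card B = 3"
    using assms obtain_subset_with_card_n by metis
  then show ?thesis using that by (auto simp: card_3_iff)
qed

lemma F1I:
  assumes "x<n" "y<n" "z<n" "a<m" "b<m" "distinct [x,y,z]" "a \<noteq> b"
    "\<omega> (x,a) > h" "\<omega> (y,a) > h" "\<omega> (z,a) > h" "\<omega> (x,b) > h" "\<omega> (y,b) > h" "\<omega> (z,b) > h"
  shows "F1 n m h \<omega>"
  unfolding F1_def
  apply (rule exI[of _ x], rule exI[of _ y], rule exI[of _ z], rule exI[of _ a], rule exI[of _ b])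
  using assms by simp

lemma F2I:
  assumes "x<n" "y<n" "z<n" "a<m" "b<m" "c<m" "distinct [x,y,z]" "distinct [a,b,c]"
    "\<omega> (x,a) > h" "\<omega> (y,a) > h" "\<omega> (z,a) > h" "\<omega> (x,b) > h" "\<omega> (y,b) > h" "\<omega> (x,c) > h" "\<omega> (z,c) > h"
  shows "F2 n m h \<omega>"
  unfolding F2_def
  apply (rule exI[of _ x], rule exI[of _ y], rule exI[of _ z], rule exI[of _ a], rule exI[of _ b], rule exI[of _ c])
  using assms by simp

lemma F3I:
  assumes "x<n" "y<n" "z<n" "a<m" "b<m" "c<m" "d<m" "distinct [x,y,z]" "distinct [a,b,c,d]"
    "\<omega> (x,a) > h" "\<omega> (y,a) > h" "\<omega> (x,b) > h" "\<omega> (y,b) > h" "\<omega> (x,c) > h" "\<omega> (z,c) > h" "\<omega> (x,d) > h" "\<omega> (z,d) > h"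
  shows "F3 n m h \<omega>"
  unfolding F3_def
  apply (rule exI[of _ x], rule exI[of _ y], rule exI[of _ z], rule exI[of _ a], rule exI[of _ b], rule exI[of _ c], rule exI[of _ d])
  using assms by simp

lemma F4I:
  assumes "w<n" "x<n" "y<n" "z<n" "a<m" "b<m" "c<m" "distinct [w,x,y,z]" "distinct [a,b,c]"
    "\<omega> (w,a) > h" "\<omega> (x,a) > h" "\<omega> (y,a) > h" "\<omega> (z,a) > h" "\<omega> (w,b) > h" "\<omega> (x,b) > h" "\<omega> (y,c) > h" "\<omega> (z,c) > h"
  shows "F4 n m h \<omega>"
  unfolding F4_def
  apply (rule exI[of _ w], rule exI[of _ x], rule exI[of _ y], rule exI[of _ z], rule exI[of _ a], rule exI[of _ b], rule exI[of _ c])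
  using assms by simp

lemma F5I:
  assumes "w<n" "x<n" "y<n" "z<n" "a<m" "b<m" "distinct [w,x,y,z]" "a \<noteq> b"
    "\<omega> (w,a) > h" "\<omega> (x,a) > h" "\<omega> (y,a) > h" "\<omega> (z,a) > h" "\<omega> (w,b) > h" "\<omega> (x,b) > h" "\<omega> (y,b) > h" "\<omega> (z,b) > h"
  shows "F5 n m h \<omega>"
  unfolding F5_def
  apply (rule exI[of _ w], rule exI[of _ x], rule exI[of _ y], rule exI[of _ z], rule exI[of _ a], rule exI[of _ b])
  using assms by simp

lemma agentF:
  assumes xyz: "x < n" "y < n" "z < n" "distinct [x,y,z]"
    and c1: "2 \<le> card (Bs \<omega> m h x y)" and c2: "2 \<le> card (Bs \<omega> m h x z)"
  shows "F1 n m h \<omega> \<or> F2 n m h \<omega> \<or> F3 n m h \<omega>"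
proof -
  obtain a b where ab: "a \<in> Bs \<omega> m h x y" "b \<in> Bs \<omega> m h x y" "a \<noteq> b" using two_elems[OF c1] by blast
  obtain c d where cd: "c \<in> Bs \<omega> m h x z" "d \<in> Bs \<omega> m h x z" "c \<noteq> d" using two_elems[OF c2] by blast
  have H: "a<m" "b<m" "c<m" "d<m" "\<omega> (x,a) > h" "\<omega> (y,a) > h" "\<omega> (x,b) > h" "\<omega> (y,b) > h"
    "\<omega> (x,c) > h" "\<omega> (z,c) > h" "\<omega> (x,d) > h" "\<omega> (z,d) > h"
    using ab cd by (auto simp: Bs_def)
  consider "c = a \<and> d = b" | "c = b \<and> d = a" | "c = a \<and> d \<noteq> b" | "c = b \<and> d \<noteq> a"
    | "d = a \<and> c \<noteq> b" | "d = b \<and> c \<noteq> a" | "c \<noteq> a \<and> c \<noteq> b \<and> d \<noteq> a \<and> d \<noteq> b" by blast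
  then show ?thesis
  proof cases
    case 1 then show ?thesis using F1I[where x=x and y=y and z=z and a=a and b=b] H xyz ab cd by simp
  next
    case 2 then show ?thesis using F1I[where x=x and y=y and z=z and a=a and b=b] H xyz ab cd by simp
  next
    case 3 then show ?thesis using F2I[where x=x and y=y and z=z and a=a and b=b and c=d] H xyz ab cd by simp
  next
    case 4 then show ?thesis using F2I[where x=x and y=y and z=z and a=b and b=a and c=d] H xyz ab cd by auto
  next
    case 5 then show ?thesis using F2I[where x=x and y=y and z=z and a=a and b=b and c=c] H xyz ab cd by auto
  next
    case 6 then show ?thesis using F2I[where x=x and y=y and z=z and a=b and b=a and c=c] H xyz ab cd by auto
  next
    case 7 then show ?thesis using F3I[where x=x and y=y and z=z and a=a and b=b and c=c and d=d] H xyz ab cd by auto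
  qed
qed

lemma itemF:
  assumes ag: "a < n" "b < n" "c < n" "d < n" "a \<noteq> b" "c \<noteq> d" "\<not> (a = c \<and> b = d)" "\<not> (a = d \<and> b = c)"
    and it: "j < m" "j1 < m" "j2 < m" "j1 \<noteq> j" "j2 \<noteq> j"
    and hi: "\<omega> (a,j) > h" "\<omega> (b,j) > h" "\<omega> (c,j) > h" "\<omega> (d,j) > h"
       "\<omega> (a,j1) > h" "\<omega> (b,j1) > h" "\<omega> (c,j2) > h" "\<omega> (d,j2) > h"
  shows "F1 n m h \<omega> \<or> F2 n m h \<omega> \<or> F4 n m h \<omega> \<or> F5 n m h \<omega>"
proof -
  have shared: "F1 n m h \<omega> \<or> F2 n m h \<omega>"
    if st: "s < n" "t < n" "v < n" "distinct [s,t,v]" "\<omega> (s,j) > h" "\<omega> (t,j) > h" "\<omega> (v,j) > h"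
      "\<omega> (s,j1) > h" "\<omega> (t,j1) > h" "\<omega> (s,j2) > h" "\<omega> (v,j2) > h" for s t v
  proof (cases "j1 = j2")
    case True
    then show ?thesis using F1I[where x=s and y=t and z=v and a=j and b=j1] st it by auto
  next
    case False
    then show ?thesis using F2I[where x=s and y=t and z=v and a=j and b=j1 and c=j2] st it by auto
  qed
  consider "a = c" | "a = d" | "b = c" | "b = d" | "distinct [a,b,c,d]" using ag by auto
  then show ?thesis
  proof cases
    case 1 then show ?thesis using shared[of a b d] ag hi by auto
  next
    case 2 then show ?thesis using shared[of a b c] ag hi by auto
  next
    case 3 then show ?thesis using shared[of b a d] ag hi by auto
  next
    case 4 then show ?thesis using shared[of b a c] ag hi by auto
  next
    case 5
    show ?thesis
    proof (cases "j1 = j2")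
      case True
      then show ?thesis using F5I[where w=a and x=b and y=c and z=d and a=j and b=j1] 5 ag it hi by auto
    next
      case False
      then show ?thesis using F4I[where w=a and x=b and y=c and z=d and a=j and b=j1 and c=j2] 5 ag it hi by auto
    qed
  qed
qed

lemma other_elem:
  assumes "2 \<le> card A"
  obtains j' where "j' \<in> A" "j' \<noteq> j"
  using two_elems[OF assms] by metis

theorem det_main:
  fixes \<omega> :: "nat \<times> nat \<Rightarrow> real"
  assumes le1: "\<forall>i<n. \<forall>j<m. \<omega> (i, j) \<le> 1"
    and a0: "0 < \<alpha>" and a1: "\<alpha> \<le> 1/16" and r2: "r \<ge> 2"
    and nF0: "\<not> F0 n m (1 - 2*\<alpha>) (k0 r) \<omega>"
    and nF: "r \<le> 3 \<longrightarrow> \<not> F1 n m (1 - 2*\<alpha>) \<omega> \<and> \<not> F2 n m (1 - 2*\<alpha>) \<omega> \<and> \<not> F3 n m (1 - 2*\<alpha>) \<omega>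
                 \<and> \<not> F4 n m (1 - 2*\<alpha>) \<omega> \<and> \<not> F5 n m (1 - 2*\<alpha>) \<omega>"
  shows "max_degree_le n m (E_ge n m (1 - \<alpha>) (\<lambda>i j. \<omega> (i, j)) - E_star n m r (1 - \<alpha>) (\<lambda>i j. \<omega> (i, j))) 2"
proof -
  define h where "h = 1 - 2*\<alpha>"
  define D where "D = E_ge n m (1 - \<alpha>) (\<lambda>i j. \<omega> (i, j)) - E_star n m r (1 - \<alpha>) (\<lambda>i j. \<omega> (i, j))"
  have Dmem: "(i, j) \<in> D \<longleftrightarrow> i < n \<and> j \<in> {j. j < m \<and> \<omega> (i, j) \<ge> 1 - \<alpha>} - M_star n m r (1 - \<alpha>) (\<lambda>i j. \<omega> (i, j)) i"
    for i j by (auto simp: D_def E_ge_def E_star_def)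
  have rem: "\<exists>p<n. p \<noteq> i \<and> j \<in> Bs \<omega> m h i p \<and> kk r \<le> card (Bs \<omega> m h i p)" if "(i, j) \<in> D" for i j
    using removed_in_B[OF le1 a0 a1 r2, of i j] that unfolding Dmem h_def by blast
  have cB: "card (Bs \<omega> m h x y) < k0 r" if "x < n" "y < n" "x \<noteq> y" for x y
    using nF0 that unfolding F0_def h_def by (meson not_le)
  show ?thesis
  proof (cases "r \<le> 3")
    case False
    then have "kk r = k0 r" by (simp add: kk_def k0_def)
    have "(i, j) \<notin> D" for i j
    proof
      assume ij: "(i, j) \<in> D"
      then have "i < n" using Dmem by blast
      from rem[OF ij] obtain p where "p < n" "p \<noteq> i" "kk r \<le> card (Bs \<omega> m h i p)" by blast
      with cB[OF \<open>i < n\<close>] \<open>kk r = k0 r\<close> show False by fastforce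
    qed
    then show ?thesis unfolding max_degree_le_def D_def[symmetric] by simp
  next
    case True
    then have kk2: "kk r = 2" and k03: "k0 r = 3" by (auto simp: kk_def k0_def)
    have nF': "\<not> F1 n m h \<omega>" "\<not> F2 n m h \<omega>" "\<not> F3 n m h \<omega>" "\<not> F4 n m h \<omega>" "\<not> F5 n m h \<omega>"
      using nF True unfolding h_def by auto
    have agent: "card {j. j < m \<and> (i, j) \<in> D} \<le> 2" if i: "i < n" for i
    proof (cases "{j. j < m \<and> (i, j) \<in> D} = {}")
      case True then show ?thesis by (simp only: card.empty)
    next
      case False
      then obtain j0 where "(i, j0) \<in> D" by auto
      from rem[OF this] obtain p0 where p0: "p0 < n" "p0 \<noteq> i" "2 \<le> card (Bs \<omega> m h i p0)"
        using kk2 by auto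
      have "{j. j < m \<and> (i, j) \<in> D} \<subseteq> Bs \<omega> m h i p0"
      proof
        fix j assume "j \<in> {j. j < m \<and> (i, j) \<in> D}"
        then have "(i, j) \<in> D" by simp
        from rem[OF this] obtain p where p: "p < n" "p \<noteq> i" "j \<in> Bs \<omega> m h i p" "2 \<le> card (Bs \<omega> m h i p)"
          using kk2 by auto
        show "j \<in> Bs \<omega> m h i p0"
        proof (cases "p = p0")
          case True then show ?thesis using p by simp
        next
          case False
          have "distinct [i, p0, p]" using False p p0 by auto
          from agentF[OF i p0(1) p(1) this p0(3) p(4)] nF' show ?thesis by simp
        qed
      qed
      moreover have "card (Bs \<omega> m h i p0) \<le> 2" using cB[OF i p0(1)] p0(2) k03 by auto
      moreover have "finite (Bs \<omega> m h i p0)" by (simp add: Bs_def)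
      ultimately show ?thesis by (meson card_mono le_trans)
    qed
    have item: "card {i. i < n \<and> (i, j) \<in> D} \<le> 2" if j: "j < m" for j
    proof (rule ccontr)
      assume "\<not> ?thesis"
      then have "3 \<le> card {i. i < n \<and> (i, j) \<in> D}" by simp
      then obtain x1 x2 x3 where xs: "x1 \<in> {i. i < n \<and> (i, j) \<in> D}" "x2 \<in> {i. i < n \<and> (i, j) \<in> D}"
        "x3 \<in> {i. i < n \<and> (i, j) \<in> D}" "x1 \<noteq> x2" "x1 \<noteq> x3" "x2 \<noteq> x3" by (rule three_elems)
      have gp: "\<exists>p j'. p < n \<and> p \<noteq> x \<and> j' < m \<and> j' \<noteq> j \<and> \<omega> (x, j) > h \<and> \<omega> (p, j) > h \<and> \<omega> (x, j') > h \<and> \<omega> (p, j') > h"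
        if "(x, j) \<in> D" for x
      proof -
        from rem[OF that] obtain p where p: "p < n" "p \<noteq> x" "j \<in> Bs \<omega> m h x p" "2 \<le> card (Bs \<omega> m h x p)"
          using kk2 by auto
        obtain j' where "j' \<in> Bs \<omega> m h x p" "j' \<noteq> j" using other_elem[OF p(4)] by blast
        then show ?thesis using p by (intro exI[of _ p] exI[of _ j']) (auto simp: Bs_def)
      qed
      obtain p1 j1 where 1: "p1 < n" "p1 \<noteq> x1" "j1 < m" "j1 \<noteq> j" "\<omega> (x1, j) > h" "\<omega> (p1, j) > h" "\<omega> (x1, j1) > h" "\<omega> (p1, j1) > h"
        using gp[of x1] xs(1) by auto
      obtain p2 j2 where 2: "p2 < n" "p2 \<noteq> x2" "j2 < m" "j2 \<noteq> j" "\<omega> (x2, j) > h" "\<omega> (p2, j) > h" "\<omega> (x2, j2) > h" "\<omega> (p2, j2) > h"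
        using gp[of x2] xs(2) by auto
      obtain p3 j3 where 3: "p3 < n" "p3 \<noteq> x3" "j3 < m" "j3 \<noteq> j" "\<omega> (x3, j) > h" "\<omega> (p3, j) > h" "\<omega> (x3, j3) > h" "\<omega> (p3, j3) > h"
        using gp[of x3] xs(3) by auto
      have xn: "x1 < n" "x2 < n" "x3 < n" using xs by auto
      have "F1 n m h \<omega> \<or> F2 n m h \<omega> \<or> F4 n m h \<omega> \<or> F5 n m h \<omega>"
      proof (cases "x1 = p2 \<and> p1 = x2")
        case False
        show ?thesis
          by (rule itemF[of x1 n p1 x2 p2 j m j1 j2]) (use 1 2 xn xs False j in auto)
      next
        case True
        show ?thesis
          by (rule itemF[of x1 n p1 x3 p3 j m j1 j3]) (use 1 3 xn xs True j in auto)
      qed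
      then show False using nF' by simp
    qed
    show ?thesis unfolding max_degree_le_def D_def[symmetric] using agent item by blast
  qed
qed

lemma cyl_prob:
  fixes U :: "real measure" and I :: "'i set"
  assumes Up: "prob_space U" and Ub: "sets U = sets borel"
    and C: "C \<subseteq> I" "finite C" and A: "A \<in> sets borel"
  shows "measure (Pi\<^sub>M I (\<lambda>_. U)) {\<omega> \<in> space (Pi\<^sub>M I (\<lambda>_. U)). \<forall>c\<in>C. \<omega> c \<in> A} = measure U A ^ card C"
proof -
  interpret product_prob_space "\<lambda>_. U" I
    by (simp add: product_prob_space_def product_prob_space_axioms_def product_sigma_finite_def Up prob_space_imp_sigma_finite)
  have AU: "A \<in> sets U" using A Ub by simp
  have "emeasure (Pi\<^sub>M I (\<lambda>_. U)) {\<omega> \<in> space (Pi\<^sub>M I (\<lambda>_. U)). \<forall>c\<in>C. \<omega> c \<in> A} = (\<Prod>c\<in>C. emeasure U A)"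
    by (rule emeasure_PiM_Collect) (use C AU in auto)
  also have "\<dots> = ennreal (measure U A ^ card C)"
    by (simp add: M.emeasure_eq_measure ennreal_power)
  finally show ?thesis
    by (simp add: P.emeasure_eq_measure)
qed

lemma cyl_sets:
  fixes U :: "real measure" and I :: "'i set"
  assumes Ub: "sets U = sets borel" and C: "C \<subseteq> I" "finite C" and A: "A \<in> sets borel"
  shows "{\<omega> \<in> space (Pi\<^sub>M I (\<lambda>_. U)). V \<and> (\<forall>c\<in>C. \<omega> c \<in> A)} \<in> sets (Pi\<^sub>M I (\<lambda>_. U))"
proof -
  have AU: "A \<in> sets U" using A Ub by simp
  have "{\<omega> \<in> space (Pi\<^sub>M I (\<lambda>_. U)). \<forall>c\<in>C. \<omega> c \<in> A} \<in> sets (Pi\<^sub>M I (\<lambda>_. U))"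
  proof -
    have "{\<omega> \<in> space (Pi\<^sub>M I (\<lambda>_. U)). \<forall>c\<in>C. \<omega> c \<in> A} = (\<Inter>c\<in>C. {\<omega> \<in> space (Pi\<^sub>M I (\<lambda>_. U)). \<omega> c \<in> A}) \<inter> space (Pi\<^sub>M I (\<lambda>_. U))"
      by auto
    also have "\<dots> \<in> sets (Pi\<^sub>M I (\<lambda>_. U))"
    proof (cases "C = {}")
      case True then show ?thesis by simp
    next
      case False
      have "(\<Inter>c\<in>C. {\<omega> \<in> space (Pi\<^sub>M I (\<lambda>_. U)). \<omega> c \<in> A}) \<in> sets (Pi\<^sub>M I (\<lambda>_. U))"
        using C False AU by (intro sets.finite_INT) (auto intro!: measurable_sets[OF measurable_component_singleton])
      then show ?thesis by simp
    qed
    finally show ?thesis .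
  qed
  then show ?thesis by (cases V) auto
qed

lemma union_bound:
  fixes U :: "real measure" and I :: "'i set" and X :: "'x set"
  assumes Up: "prob_space U" and Ub: "sets U = sets borel" and A: "A \<in> sets borel"
    and X: "finite X" and CX: "\<And>x. x \<in> X \<Longrightarrow> C x \<subseteq> I \<and> finite (C x)"
    and sX: "\<And>x. x \<in> X \<Longrightarrow> V x \<Longrightarrow> s \<le> card (C x)"
  shows "measure (Pi\<^sub>M I (\<lambda>_. U)) (\<Union>x\<in>X. {\<omega> \<in> space (Pi\<^sub>M I (\<lambda>_. U)). V x \<and> (\<forall>c\<in>C x. \<omega> c \<in> A)})
          \<le> real (card X) * measure U A ^ s"
    and "(\<Union>x\<in>X. {\<omega> \<in> space (Pi\<^sub>M I (\<lambda>_. U)). V x \<and> (\<forall>c\<in>C x. \<omega> c \<in> A)}) \<in> sets (Pi\<^sub>M I (\<lambda>_. U))"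
proof -
  let ?P = "Pi\<^sub>M I (\<lambda>_. U)"
  let ?E = "\<lambda>x. {\<omega> \<in> space ?P. V x \<and> (\<forall>c\<in>C x. \<omega> c \<in> A)}"
  have Es: "?E x \<in> sets ?P" if "x \<in> X" for x using cyl_sets[OF Ub _ _ A] CX[OF that] by blast
  then show "(\<Union>x\<in>X. ?E x) \<in> sets ?P" using X by auto
  interpret prob_space U by (rule Up)
  have r01: "0 \<le> measure U A" "measure U A \<le> 1" by auto
  have "measure ?P (\<Union>x\<in>X. ?E x) \<le> (\<Sum>x\<in>X. measure ?P (?E x))"
    by (rule measure_UNION_le[OF X Es])
  also have "\<dots> \<le> (\<Sum>x\<in>X. measure U A ^ s)"
  proof (rule sum_mono)
    fix x assume x: "x \<in> X"
    show "measure ?P (?E x) \<le> measure U A ^ s"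
    proof (cases "V x")
      case True
      then have "measure ?P (?E x) = measure U A ^ card (C x)"
        using cyl_prob[OF Up Ub _ _ A, of "C x" I] CX[OF x] by simp
      also have "\<dots> \<le> measure U A ^ s" using sX[OF x True] r01 by (simp add: power_decreasing)
      finally show ?thesis .
    next
      case False then show ?thesis using r01 by simp
    qed
  qed
  also have "\<dots> = real (card X) * measure U A ^ s" by simp
  finally show "measure ?P (\<Union>x\<in>X. ?E x) \<le> real (card X) * measure U A ^ s" .
qed

lemma U0_cover:
  fixes \<omega> :: "nat \<times> nat \<Rightarrow> real"
  assumes "F0 n m h k \<omega>" "\<omega> \<in> S"
  shows "\<omega> \<in> (\<Union>x\<in>{..<n}\<times>{..<n}\<times>{K. K \<subseteq> {..<m} \<and> card K = k}.
     {\<omega> \<in> S. (case x of (x,y,K) \<Rightarrow> x \<noteq> y) \<and> (\<forall>c\<in>(case x of (x,y,K) \<Rightarrow> {x,y}\<times>K). \<omega> c \<in> {h<..})})"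
proof -
  from assms(1) obtain x y where xy: "x < n" "y < n" "x \<noteq> y" "k \<le> card (Bs \<omega> m h x y)"
    unfolding F0_def by blast
  obtain K where K: "K \<subseteq> Bs \<omega> m h x y" "card K = k"
    using obtain_subset_with_card_n[OF xy(4)] by blast
  have "K \<subseteq> {..<m}" using K by (auto simp: Bs_def)
  moreover have "\<forall>c\<in>{x,y}\<times>K. \<omega> c \<in> {h<..}" using K by (auto simp: Bs_def)
  ultimately show ?thesis using xy K assms(2) by (intro UN_I[of "(x,y,K)"]) auto
qed

lemma U1_cover:
  fixes \<omega> :: "nat \<times> nat \<Rightarrow> real"
  assumes "F1 n m h \<omega>" "\<omega> \<in> S"
  shows "\<omega> \<in> (\<Union>v\<in>{..<n}\<times>{..<n}\<times>{..<n}\<times>{..<m}\<times>{..<m}.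
     {\<omega> \<in> S. (case v of (x,y,z,a,b) \<Rightarrow> distinct [x,y,z] \<and> a \<noteq> b) \<and>
        (\<forall>c\<in>(case v of (x,y,z,a,b) \<Rightarrow> set [(x,a),(y,a),(z,a),(x,b),(y,b),(z,b)]). \<omega> c \<in> {h<..})})"
proof -
  from assms(1) obtain x y z a b where H: "x<n" "y<n" "z<n" "a<m" "b<m" "distinct [x,y,z]" "a \<noteq> b"
      "\<forall>c\<in>{x,y,z}\<times>{a,b}. \<omega> c > h" unfolding F1_def by blast
  show ?thesis using H assms(2) by (intro UN_I[of "(x,y,z,a,b)"]) auto
qed

lemma U2_cover:
  fixes \<omega> :: "nat \<times> nat \<Rightarrow> real"
  assumes "F2 n m h \<omega>" "\<omega> \<in> S"
  shows "\<omega> \<in> (\<Union>v\<in>{..<n}\<times>{..<n}\<times>{..<n}\<times>{..<m}\<times>{..<m}\<times>{..<m}.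
     {\<omega> \<in> S. (case v of (x,y,z,a,b,c) \<Rightarrow> distinct [x,y,z] \<and> distinct [a,b,c]) \<and>
        (\<forall>p\<in>(case v of (x,y,z,a,b,c) \<Rightarrow> set [(x,a),(y,a),(z,a),(x,b),(y,b),(x,c),(z,c)]). \<omega> p \<in> {h<..})})"
proof -
  from assms(1) obtain x y z a b c where H: "x<n" "y<n" "z<n" "a<m" "b<m" "c<m" "distinct [x,y,z]" "distinct [a,b,c]"
      "\<forall>p\<in>{x,y,z}\<times>{a} \<union> {x,y}\<times>{b} \<union> {x,z}\<times>{c}. \<omega> p > h" unfolding F2_def by blast
  show ?thesis using H assms(2) by (intro UN_I[of "(x,y,z,a,b,c)"]) auto
qed

lemma U3_cover:
  fixes \<omega> :: "nat \<times> nat \<Rightarrow> real"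
  assumes "F3 n m h \<omega>" "\<omega> \<in> S"
  shows "\<omega> \<in> (\<Union>v\<in>{..<n}\<times>{..<n}\<times>{..<n}\<times>{..<m}\<times>{..<m}\<times>{..<m}\<times>{..<m}.
     {\<omega> \<in> S. (case v of (x,y,z,a,b,c,d) \<Rightarrow> distinct [x,y,z] \<and> distinct [a,b,c,d]) \<and>
        (\<forall>p\<in>(case v of (x,y,z,a,b,c,d) \<Rightarrow> set [(x,a),(y,a),(x,b),(y,b),(x,c),(z,c),(x,d),(z,d)]). \<omega> p \<in> {h<..})})"
proof -
  from assms(1) obtain x y z a b c d where H: "x<n" "y<n" "z<n" "a<m" "b<m" "c<m" "d<m" "distinct [x,y,z]" "distinct [a,b,c,d]"
      "\<forall>p\<in>{x,y}\<times>{a,b} \<union> {x,z}\<times>{c,d}. \<omega> p > h" unfolding F3_def by blast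
  show ?thesis using H assms(2) by (intro UN_I[of "(x,y,z,a,b,c,d)"]) auto
qed

lemma U4_cover:
  fixes \<omega> :: "nat \<times> nat \<Rightarrow> real"
  assumes "F4 n m h \<omega>" "\<omega> \<in> S"
  shows "\<omega> \<in> (\<Union>v\<in>{..<n}\<times>{..<n}\<times>{..<n}\<times>{..<n}\<times>{..<m}\<times>{..<m}\<times>{..<m}.
     {\<omega> \<in> S. (case v of (w,x,y,z,a,b,c) \<Rightarrow> distinct [w,x,y,z] \<and> distinct [a,b,c]) \<and>
        (\<forall>p\<in>(case v of (w,x,y,z,a,b,c) \<Rightarrow> set [(w,a),(x,a),(y,a),(z,a),(w,b),(x,b),(y,c),(z,c)]). \<omega> p \<in> {h<..})})"
proof -
  from assms(1) obtain w x y z a b c where H: "w<n" "x<n" "y<n" "z<n" "a<m" "b<m" "c<m" "distinct [w,x,y,z]" "distinct [a,b,c]"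
      "\<forall>p\<in>{w,x,y,z}\<times>{a} \<union> {w,x}\<times>{b} \<union> {y,z}\<times>{c}. \<omega> p > h" unfolding F4_def by blast
  show ?thesis using H assms(2) by (intro UN_I[of "(w,x,y,z,a,b,c)"]) auto
qed

lemma U5_cover:
  fixes \<omega> :: "nat \<times> nat \<Rightarrow> real"
  assumes "F5 n m h \<omega>" "\<omega> \<in> S"
  shows "\<omega> \<in> (\<Union>v\<in>{..<n}\<times>{..<n}\<times>{..<n}\<times>{..<n}\<times>{..<m}\<times>{..<m}.
     {\<omega> \<in> S. (case v of (w,x,y,z,a,b) \<Rightarrow> distinct [w,x,y,z] \<and> a \<noteq> b) \<and>
        (\<forall>p\<in>(case v of (w,x,y,z,a,b) \<Rightarrow> set [(w,a),(x,a),(y,a),(z,a),(w,b),(x,b),(y,b),(z,b)]). \<omega> p \<in> {h<..})})"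
proof -
  from assms(1) obtain w x y z a b where H: "w<n" "x<n" "y<n" "z<n" "a<m" "b<m" "distinct [w,x,y,z]" "a \<noteq> b"
      "\<forall>p\<in>{w,x,y,z}\<times>{a,b}. \<omega> p > h" unfolding F5_def by blast
  show ?thesis using H assms(2) by (intro UN_I[of "(w,x,y,z,a,b)"]) auto
qed

lemma bad_bound:
  fixes U :: "real measure" and n m r :: nat and \<alpha> :: real
  assumes Up: "prob_space U" and Ub: "sets U = sets borel" and Ugt1: "measure U {1<..} = 0"
    and a0: "0 < \<alpha>" and a1: "\<alpha> \<le> 1/16" and r2: "r \<ge> 2"
    and meas: "{\<omega> \<in> space (Pi\<^sub>M ({..<n}\<times>{..<m}) (\<lambda>_. U)). max_degree_le n m
        (E_ge n m (1 - \<alpha>) (\<lambda>i j. \<omega> (i, j)) - E_star n m r (1 - \<alpha>) (\<lambda>i j. \<omega> (i, j))) 2}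
        \<in> sets (Pi\<^sub>M ({..<n}\<times>{..<m}) (\<lambda>_. U))"
  shows "measure (Pi\<^sub>M ({..<n}\<times>{..<m}) (\<lambda>_. U)) {\<omega> \<in> space (Pi\<^sub>M ({..<n}\<times>{..<m}) (\<lambda>_. U)). max_degree_le n m
        (E_ge n m (1 - \<alpha>) (\<lambda>i j. \<omega> (i, j)) - E_star n m r (1 - \<alpha>) (\<lambda>i j. \<omega> (i, j))) 2}
     \<ge> 1 - (real (n * n * (m choose k0 r)) * measure U {1 - 2*\<alpha><..} ^ (2 * k0 r)
          + (if r \<le> 3 then real (n^3*m^2) * measure U {1 - 2*\<alpha><..} ^ 6 + real (n^3*m^3) * measure U {1 - 2*\<alpha><..} ^ 7
               + real (n^3*m^4) * measure U {1 - 2*\<alpha><..} ^ 8 + real (n^4*m^3) * measure U {1 - 2*\<alpha><..} ^ 8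
               + real (n^4*m^2) * measure U {1 - 2*\<alpha><..} ^ 8 else 0))"
proof -
  define I where "I = {..<n}\<times>{..<m}"
  define P where "P = Pi\<^sub>M I (\<lambda>_. U)"
  define S where "S = space P"
  define h where "h = 1 - 2*\<alpha>"
  define \<rho> where "\<rho> = measure U {h<..}"
  interpret Pp: prob_space P unfolding P_def by (rule prob_space_PiM) (use Up in auto)
  have hb: "{h<..} \<in> sets borel" "{(1::real)<..} \<in> sets borel" by auto
  define W where "W = (\<Union>c\<in>I. {\<omega> \<in> S. True \<and> (\<forall>c'\<in>{c}. \<omega> c' \<in> {1<..})})"
  have W: "W \<in> sets P" "measure P W \<le> real (card I) * measure U {1<..} ^ 1"
    unfolding W_def S_def P_def by (rule union_bound[OF Up Ub hb(2)]; auto simp: I_def)+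
  define U0 where "U0 = (\<Union>x\<in>{..<n}\<times>{..<n}\<times>{K. K \<subseteq> {..<m} \<and> card K = k0 r}.
     {\<omega> \<in> S. (case x of (x,y,K) \<Rightarrow> x \<noteq> y) \<and> (\<forall>c\<in>(case x of (x,y,K) \<Rightarrow> {x,y}\<times>K). \<omega> c \<in> {h<..})})"
  have U0: "U0 \<in> sets P" "measure P U0 \<le> real (card ({..<n}\<times>{..<n}\<times>{K. K \<subseteq> {..<m} \<and> card K = k0 r})) * \<rho> ^ (2 * k0 r)"
    unfolding U0_def S_def P_def \<rho>_def
    by (rule union_bound[OF Up Ub hb(1)]; auto simp: I_def card_cartesian_product dest: finite_subset)+
  have cU0: "card ({..<n}\<times>{..<n}\<times>{K. K \<subseteq> {..<m} \<and> card K = k0 r}) = n * n * (m choose k0 r)"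
    by (simp add: card_cartesian_product n_subsets)
  define U1 where "U1 = (\<Union>v\<in>{..<n}\<times>{..<n}\<times>{..<n}\<times>{..<m}\<times>{..<m}.
     {\<omega> \<in> S. (case v of (x,y,z,a,b) \<Rightarrow> distinct [x,y,z] \<and> a \<noteq> b) \<and>
        (\<forall>c\<in>(case v of (x,y,z,a,b) \<Rightarrow> set [(x,a),(y,a),(z,a),(x,b),(y,b),(z,b)]). \<omega> c \<in> {h<..})})"
  define U1 where "U1 = (\<Union>v\<in>{..<n}\<times>{..<n}\<times>{..<n}\<times>{..<m}\<times>{..<m}.
     {\<omega> \<in> S. (case v of (x,y,z,a,b) \<Rightarrow> distinct [x,y,z] \<and> a \<noteq> b) \<and> (\<forall>p\<in>(case v of (x,y,z,a,b) \<Rightarrow> set [(x,a),(y,a),(z,a),(x,b),(y,b),(z,b)]). \<omega> p \<in> {h<..})})"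
  have U1s: "U1 \<in> sets P" "measure P U1 \<le> real (card ({..<n}\<times>{..<n}\<times>{..<n}\<times>{..<m}\<times>{..<m})) * \<rho> ^ 6"
    unfolding U1_def S_def P_def \<rho>_def
    by (rule union_bound[OF Up Ub hb(1)]; auto simp: I_def card_cartesian_product distinct_card[symmetric])+
  have cU1: "card ({..<n}\<times>{..<n}\<times>{..<n}\<times>{..<m}\<times>{..<m}) = n^3*m^2" by (simp add: card_cartesian_product power_def)
  define U2 where "U2 = (\<Union>v\<in>{..<n}\<times>{..<n}\<times>{..<n}\<times>{..<m}\<times>{..<m}\<times>{..<m}.
     {\<omega> \<in> S. (case v of (x,y,z,a,b,c) \<Rightarrow> distinct [x,y,z] \<and> distinct [a,b,c]) \<and> (\<forall>p\<in>(case v of (x,y,z,a,b,c) \<Rightarrow> set [(x,a),(y,a),(z,a),(x,b),(y,b),(x,c),(z,c)]). \<omega> p \<in> {h<..})})"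
  have U2s: "U2 \<in> sets P" "measure P U2 \<le> real (card ({..<n}\<times>{..<n}\<times>{..<n}\<times>{..<m}\<times>{..<m}\<times>{..<m})) * \<rho> ^ 7"
    unfolding U2_def S_def P_def \<rho>_def
    by (rule union_bound[OF Up Ub hb(1)]; auto simp: I_def card_cartesian_product distinct_card[symmetric])+
  have cU2: "card ({..<n}\<times>{..<n}\<times>{..<n}\<times>{..<m}\<times>{..<m}\<times>{..<m}) = n^3*m^3" by (simp add: card_cartesian_product power_def)
  define U3 where "U3 = (\<Union>v\<in>{..<n}\<times>{..<n}\<times>{..<n}\<times>{..<m}\<times>{..<m}\<times>{..<m}\<times>{..<m}.
     {\<omega> \<in> S. (case v of (x,y,z,a,b,c,d) \<Rightarrow> distinct [x,y,z] \<and> distinct [a,b,c,d]) \<and> (\<forall>p\<in>(case v of (x,y,z,a,b,c,d) \<Rightarrow> set [(x,a),(y,a),(x,b),(y,b),(x,c),(z,c),(x,d),(z,d)]). \<omega> p \<in> {h<..})})"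
  have U3s: "U3 \<in> sets P" "measure P U3 \<le> real (card ({..<n}\<times>{..<n}\<times>{..<n}\<times>{..<m}\<times>{..<m}\<times>{..<m}\<times>{..<m})) * \<rho> ^ 8"
    unfolding U3_def S_def P_def \<rho>_def
    by (rule union_bound[OF Up Ub hb(1)]; auto simp: I_def card_cartesian_product distinct_card[symmetric])+
  have cU3: "card ({..<n}\<times>{..<n}\<times>{..<n}\<times>{..<m}\<times>{..<m}\<times>{..<m}\<times>{..<m}) = n^3*m^4" by (simp add: card_cartesian_product power_def)
  define U4 where "U4 = (\<Union>v\<in>{..<n}\<times>{..<n}\<times>{..<n}\<times>{..<n}\<times>{..<m}\<times>{..<m}\<times>{..<m}.
     {\<omega> \<in> S. (case v of (w,x,y,z,a,b,c) \<Rightarrow> distinct [w,x,y,z] \<and> distinct [a,b,c]) \<and> (\<forall>p\<in>(case v of (w,x,y,z,a,b,c) \<Rightarrow> set [(w,a),(x,a),(y,a),(z,a),(w,b),(x,b),(y,c),(z,c)]). \<omega> p \<in> {h<..})})"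
  have U4s: "U4 \<in> sets P" "measure P U4 \<le> real (card ({..<n}\<times>{..<n}\<times>{..<n}\<times>{..<n}\<times>{..<m}\<times>{..<m}\<times>{..<m})) * \<rho> ^ 8"
    unfolding U4_def S_def P_def \<rho>_def
    by (rule union_bound[OF Up Ub hb(1)]; auto simp: I_def card_cartesian_product distinct_card[symmetric])+
  have cU4: "card ({..<n}\<times>{..<n}\<times>{..<n}\<times>{..<n}\<times>{..<m}\<times>{..<m}\<times>{..<m}) = n^4*m^3" by (simp add: card_cartesian_product power_def)
  define U5 where "U5 = (\<Union>v\<in>{..<n}\<times>{..<n}\<times>{..<n}\<times>{..<n}\<times>{..<m}\<times>{..<m}.
     {\<omega> \<in> S. (case v of (w,x,y,z,a,b) \<Rightarrow> distinct [w,x,y,z] \<and> a \<noteq> b) \<and> (\<forall>p\<in>(case v of (w,x,y,z,a,b) \<Rightarrow> set [(w,a),(x,a),(y,a),(z,a),(w,b),(x,b),(y,b),(z,b)]). \<omega> p \<in> {h<..})})"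
  have U5s: "U5 \<in> sets P" "measure P U5 \<le> real (card ({..<n}\<times>{..<n}\<times>{..<n}\<times>{..<n}\<times>{..<m}\<times>{..<m})) * \<rho> ^ 8"
    unfolding U5_def S_def P_def \<rho>_def
    by (rule union_bound[OF Up Ub hb(1)]; auto simp: I_def card_cartesian_product distinct_card[symmetric])+
  have cU5: "card ({..<n}\<times>{..<n}\<times>{..<n}\<times>{..<n}\<times>{..<m}\<times>{..<m}) = n^4*m^2" by (simp add: card_cartesian_product power_def)
  have W0: "measure P W = 0" using W Ugt1 measure_nonneg[of P W] by simp
  define Bad where "Bad = W \<union> U0 \<union> (if r \<le> 3 then U1 \<union> U2 \<union> U3 \<union> U4 \<union> U5 else {})"
  have Bads: "Bad \<in> sets P" unfolding Bad_def using W U0 U1s U2s U3s U4s U5s by auto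
  have mB: "measure P Bad \<le> real (n * n * (m choose k0 r)) * \<rho> ^ (2 * k0 r)
          + (if r \<le> 3 then real (n^3*m^2) * \<rho> ^ 6 + real (n^3*m^3) * \<rho> ^ 7
               + real (n^3*m^4) * \<rho> ^ 8 + real (n^4*m^3) * \<rho> ^ 8
               + real (n^4*m^2) * \<rho> ^ 8 else 0)"
  proof -
    have "measure P Bad \<le> measure P (W \<union> U0) + measure P (if r \<le> 3 then U1 \<union> U2 \<union> U3 \<union> U4 \<union> U5 else {})"
      unfolding Bad_def by (rule measure_Un_le) (use W U0 U1s U2s U3s U4s U5s in auto)
    also have "measure P (W \<union> U0) \<le> measure P W + measure P U0"
      by (rule measure_Un_le) (use W U0 in auto)
    also have "measure P (if r \<le> 3 then U1 \<union> U2 \<union> U3 \<union> U4 \<union> U5 else {}) \<le>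
        (if r \<le> 3 then measure P U1 + measure P U2 + measure P U3 + measure P U4 + measure P U5 else 0)"
    proof (cases "r \<le> 3")
      case True
      have "measure P (U1 \<union> U2 \<union> U3 \<union> U4 \<union> U5) \<le> measure P (U1 \<union> U2 \<union> U3 \<union> U4) + measure P U5"
        by (rule measure_Un_le) (use U1s U2s U3s U4s U5s in auto)
      also have "measure P (U1 \<union> U2 \<union> U3 \<union> U4) \<le> measure P (U1 \<union> U2 \<union> U3) + measure P U4"
        by (rule measure_Un_le) (use U1s U2s U3s U4s in auto)
      also have "measure P (U1 \<union> U2 \<union> U3) \<le> measure P (U1 \<union> U2) + measure P U3"
        by (rule measure_Un_le) (use U1s U2s U3s in auto)
      also have "measure P (U1 \<union> U2) \<le> measure P U1 + measure P U2"
        by (rule measure_Un_le) (use U1s U2s in auto)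
      finally show ?thesis using True by simp
    qed simp
    finally show ?thesis
      using W0 U0(2) cU0 U1s(2) cU1 U2s(2) cU2 U3s(2) cU3 U4s(2) cU4 U5s(2) cU5
      by (simp split: if_splits)
  qed
  have sub: "S - Bad \<subseteq> {\<omega> \<in> S. max_degree_le n m
        (E_ge n m (1 - \<alpha>) (\<lambda>i j. \<omega> (i, j)) - E_star n m r (1 - \<alpha>) (\<lambda>i j. \<omega> (i, j))) 2}"
  proof
    fix \<omega> assume \<omega>: "\<omega> \<in> S - Bad"
    have le1: "\<forall>i<n. \<forall>j<m. \<omega> (i, j) \<le> 1"
    proof (intro allI impI, rule ccontr)
      fix i j assume "i < n" "j < m" "\<not> \<omega> (i, j) \<le> 1"
      then have "\<omega> \<in> W" using \<omega> unfolding W_def I_def by (intro UN_I[of "(i,j)"]) auto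
      then show False using \<omega> unfolding Bad_def by auto
    qed
    have nF0: "\<not> F0 n m h (k0 r) \<omega>"
      using U0_cover[of n m h "k0 r" \<omega> S] \<omega> unfolding U0_def Bad_def by blast
    have nF: "r \<le> 3 \<longrightarrow> \<not> F1 n m h \<omega> \<and> \<not> F2 n m h \<omega> \<and> \<not> F3 n m h \<omega> \<and> \<not> F4 n m h \<omega> \<and> \<not> F5 n m h \<omega>"
      using U1_cover[of n m h \<omega> S] U2_cover[of n m h \<omega> S] U3_cover[of n m h \<omega> S]
        U4_cover[of n m h \<omega> S] U5_cover[of n m h \<omega> S] \<omega>
      unfolding U1_def U2_def U3_def U4_def U5_def Bad_def by auto
    show "\<omega> \<in> {\<omega> \<in> S. max_degree_le n m
        (E_ge n m (1 - \<alpha>) (\<lambda>i j. \<omega> (i, j)) - E_star n m r (1 - \<alpha>) (\<lambda>i j. \<omega> (i, j))) 2}"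
      using det_main[OF le1 a0 a1 r2 nF0[unfolded h_def] nF[unfolded h_def]] \<omega> by simp
  qed
  have "1 - measure P Bad = measure P (S - Bad)"
    unfolding S_def using Pp.prob_compl[OF Bads] by simp
  also have "\<dots> \<le> measure P {\<omega> \<in> S. max_degree_le n m
        (E_ge n m (1 - \<alpha>) (\<lambda>i j. \<omega> (i, j)) - E_star n m r (1 - \<alpha>) (\<lambda>i j. \<omega> (i, j))) 2}"
    by (rule Pp.finite_measure_mono[OF sub]) (use meas in \<open>simp add: S_def P_def I_def\<close>)
  finally show ?thesis using mB unfolding S_def P_def I_def \<rho>_def h_def by linarith
qed

fun Gsel :: "(nat \<Rightarrow> real) \<Rightarrow> nat \<Rightarrow> nat list list \<Rightarrow> real" where
  "Gsel f r [] = 0"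
| "Gsel f r (ys # L) = (if sorted (map f ys) then sum_list (take r (rev (map f ys))) else Gsel f r L)"

lemma Gsel_eq:
  assumes "\<forall>ys\<in>set L. mset ys = mset xs" "\<exists>ys\<in>set L. sorted (map f ys)"
  shows "Gsel f r L = sum_list (take r (rev (sort (map f xs))))"
  using assms
proof (induction L)
  case Nil then show ?case by simp
next
  case (Cons ys L)
  show ?case
  proof (cases "sorted (map f ys)")
    case True
    have "sort (map f xs) = map f ys"
      by (rule properties_for_sort) (use Cons.prems True in \<open>auto simp: mset_map\<close>)
    then show ?thesis using True by simp
  next
    case False
    then show ?thesis using Cons by auto
  qed
qed

lemma meas_sum_list_map:
  fixes F :: "nat \<Rightarrow> 'a \<Rightarrow> real"
  assumes "\<And>j. F j \<in> borel_measurable M"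
  shows "(\<lambda>\<omega>. sum_list (map (\<lambda>j. F j \<omega>) zs)) \<in> borel_measurable M"
proof -
  have "(\<lambda>\<omega>. sum_list (map (\<lambda>j. F j \<omega>) zs)) = (\<lambda>\<omega>. \<Sum>k<length zs. F (zs ! k) \<omega>)"
    by (simp add: sum_list_sum_nth atLeast0LessThan)
  also have "\<dots> \<in> borel_measurable M" using assms by measurable
  finally show ?thesis .
qed

lemma meas_sorted:
  fixes F :: "nat \<Rightarrow> 'a \<Rightarrow> real"
  assumes "\<And>j. F j \<in> borel_measurable M"
  shows "{\<omega> \<in> space M. sorted (map (\<lambda>j. F j \<omega>) ys)} \<in> sets M"
proof -
  have "{\<omega> \<in> space M. sorted (map (\<lambda>j. F j \<omega>) ys)} =
        {\<omega> \<in> space M. \<forall>i\<in>{i. Suc i < length ys}. F (ys ! i) \<omega> \<le> F (ys ! Suc i) \<omega>}"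
    by (auto simp: sorted_iff_nth_Suc)
  also have "\<dots> \<in> sets M" using assms by measurable
  finally show ?thesis .
qed

lemma Gsel_meas:
  assumes "\<And>j. F j \<in> borel_measurable M"
  shows "(\<lambda>\<omega>. Gsel (\<lambda>j. F j \<omega>) r L) \<in> borel_measurable M"
proof (induction L)
  case Nil then show ?case by simp
next
  case (Cons ys L)
  have "(\<lambda>\<omega>. sum_list (take r (rev (map (\<lambda>j. F j \<omega>) ys)))) = (\<lambda>\<omega>. sum_list (map (\<lambda>j. F j \<omega>) (take r (rev ys))))"
    by (simp add: rev_map take_map)
  then have m1: "(\<lambda>\<omega>. sum_list (take r (rev (map (\<lambda>j. F j \<omega>) ys)))) \<in> borel_measurable M"
    using meas_sum_list_map[OF assms] by simp
  show ?case
    by (simp only: Gsel.simps) (rule measurable_If[OF m1 Cons.IH meas_sorted[OF assms]])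
qed

lemma meas_sum_top:
  assumes F: "\<And>j. F j \<in> borel_measurable M" and S: "finite S"
  shows "(\<lambda>\<omega>. sum_top r (\<lambda>j. F j \<omega>) S) \<in> borel_measurable M"
proof -
  define xs where "xs = sorted_list_of_set S"
  have "finite {ys. set ys \<subseteq> set xs \<and> length ys = length xs}" by (rule finite_lists_length_eq) simp
  moreover have "{ys. mset ys = mset xs} \<subseteq> {ys. set ys \<subseteq> set xs \<and> length ys = length xs}"
    by (auto dest: mset_eq_setD mset_eq_length)
  ultimately have "finite {ys. mset ys = mset xs}" by (rule finite_subset[rotated])
  then obtain L where L: "set L = {ys. mset ys = mset xs}" using finite_list by blast
  have eq: "sum_top r (\<lambda>j. F j \<omega>) S = Gsel (\<lambda>j. F j \<omega>) r L" for \<omega>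
  proof -
    have "sort_key (\<lambda>j. F j \<omega>) xs \<in> set L" using L by simp
    moreover have "sorted (map (\<lambda>j. F j \<omega>) (sort_key (\<lambda>j. F j \<omega>) xs))" by simp
    ultimately have "\<exists>ys\<in>set L. sorted (map (\<lambda>j. F j \<omega>) ys)" by blast
    then show ?thesis unfolding sum_top_def xs_def[symmetric] using L by (subst Gsel_eq) auto
  qed
  show ?thesis unfolding eq by (rule Gsel_meas[OF F])
qed

lemma meas_setfun:
  fixes m :: nat
  assumes fin: "S \<subseteq> {..<m}" and Q: "\<And>j. j \<in> S \<Longrightarrow> {\<omega> \<in> space M. Q j \<omega>} \<in> sets M"
  shows "(\<lambda>\<omega>. {j\<in>S. Q j \<omega>}) \<in> measurable M (count_space (Pow {..<m}))"
proof (subst measurable_count_space_eq2)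
  show "finite (Pow {..<m})" by simp
  have finS: "finite S" using fin finite_subset by blast
  show "(\<lambda>\<omega>. {j\<in>S. Q j \<omega>}) \<in> space M \<rightarrow> Pow {..<m} \<and>
    (\<forall>a\<in>Pow {..<m}. (\<lambda>\<omega>. {j\<in>S. Q j \<omega>}) -` {a} \<inter> space M \<in> sets M)"
  proof (intro conjI ballI)
    show "(\<lambda>\<omega>. {j\<in>S. Q j \<omega>}) \<in> space M \<rightarrow> Pow {..<m}" using fin by auto
    fix T assume "T \<in> Pow {..<m}"
    show "(\<lambda>\<omega>. {j\<in>S. Q j \<omega>}) -` {T} \<inter> space M \<in> sets M"
    proof (cases "T \<subseteq> S")
      case False
      then have "(\<lambda>\<omega>. {j\<in>S. Q j \<omega>}) -` {T} \<inter> space M = {}" by auto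
      then show ?thesis by simp
    next
      case True
      have "(\<lambda>\<omega>. {j\<in>S. Q j \<omega>}) -` {T} \<inter> space M = {\<omega> \<in> space M. \<forall>j\<in>S. Q j \<omega> \<longleftrightarrow> j \<in> T}"
        using True by auto
      also have "\<dots> \<in> sets M"
        using Q finS by measurable
      finally show ?thesis .
    qed
  qed
qed

lemma meas_step:
  fixes F :: "nat \<Rightarrow> 'a \<Rightarrow> real" and m :: nat
  assumes F: "\<And>j. F j \<in> borel_measurable M" and T: "T \<subseteq> {..<m}"
  shows "(\<lambda>\<omega>. removal_step r \<tau> (\<lambda>j. F j \<omega>) T) \<in> measurable M (count_space (Pow {..<m}))"
proof -
  have finT: "finite T" using T finite_subset by blast
  have eq: "removal_step r \<tau> (\<lambda>j. F j \<omega>) T = (if T \<noteq> {} \<and> sum_top r (\<lambda>j. F j \<omega>) T > real r * \<tau>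
      then {j\<in>T. \<not> (F j \<omega> = Max ((\<lambda>j. F j \<omega>) ` T))} else T)" for \<omega>
    by (auto simp: removal_step_def)
  have st: "(\<lambda>\<omega>. sum_top r (\<lambda>j. F j \<omega>) T) \<in> borel_measurable M" by (rule meas_sum_top[OF F finT])
  have mx: "(\<lambda>\<omega>. Max ((\<lambda>j. F j \<omega>) ` T)) \<in> borel_measurable M"
    by (rule borel_measurable_Max[OF finT F])
  show ?thesis unfolding eq
  proof (rule measurable_If)
    show "(\<lambda>\<omega>. {j\<in>T. \<not> (F j \<omega> = Max ((\<lambda>j. F j \<omega>) ` T))}) \<in> measurable M (count_space (Pow {..<m}))"
      by (rule meas_setfun[OF T]) (use F mx in measurable)
    show "(\<lambda>\<omega>. T) \<in> measurable M (count_space (Pow {..<m}))" using T by simp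
    show "{\<omega> \<in> space M. T \<noteq> {} \<and> sum_top r (\<lambda>j. F j \<omega>) T > real r * \<tau>} \<in> sets M"
      using st by measurable
  qed
qed

lemma meas_iter:
  fixes F :: "nat \<Rightarrow> 'a \<Rightarrow> real" and m :: nat
  assumes F: "\<And>j. F j \<in> borel_measurable M" and T: "T \<subseteq> {..<m}"
  shows "(\<lambda>\<omega>. (removal_step r \<tau> (\<lambda>j. F j \<omega>) ^^ k) T) \<in> measurable M (count_space (Pow {..<m}))"
proof (induction k)
  case 0 then show ?case using T by simp
next
  case (Suc k)
  have "(\<lambda>\<omega>. (\<lambda>T' \<omega>. removal_step r \<tau> (\<lambda>j. F j \<omega>) T') ((removal_step r \<tau> (\<lambda>j. F j \<omega>) ^^ k) T) \<omega>)
      \<in> measurable M (count_space (Pow {..<m}))"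
    by (rule measurable_compose_countable'[OF _ Suc.IH]) (auto intro: meas_step[OF F] countable_finite)
  then show ?case by simp
qed

lemma meas_loop:
  fixes F :: "nat \<Rightarrow> 'a \<Rightarrow> real" and m :: nat
  assumes F: "\<And>j. F j \<in> borel_measurable M" and g: "g \<in> measurable M (count_space (Pow {..<m}))"
  shows "(\<lambda>\<omega>. removal_loop r \<tau> (\<lambda>j. F j \<omega>) (g \<omega>)) \<in> measurable M (count_space (Pow {..<m}))"
proof -
  have "(\<lambda>\<omega>. (\<lambda>T \<omega>. removal_loop r \<tau> (\<lambda>j. F j \<omega>) T) (g \<omega>) \<omega>) \<in> measurable M (count_space (Pow {..<m}))"
    by (rule measurable_compose_countable'[OF _ g]) (auto simp: removal_loop_def intro: meas_iter[OF F] countable_finite)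
  then show ?thesis by simp
qed

lemma meas_foldl:
  fixes X :: "nat \<Rightarrow> nat \<Rightarrow> 'a \<Rightarrow> real" and m :: nat
  assumes X: "\<And>i j. X i j \<in> borel_measurable M"
  shows "g \<in> measurable M (count_space (Pow {..<m})) \<Longrightarrow>
    (\<lambda>\<omega>. foldl (\<lambda>S i'. removal_loop r \<tau> (\<lambda>j. X i' j \<omega>) S) (g \<omega>) L) \<in> measurable M (count_space (Pow {..<m}))"
proof (induction L arbitrary: g)
  case Nil then show ?case by simp
next
  case (Cons a L)
  have "(\<lambda>\<omega>. removal_loop r \<tau> (\<lambda>j. X a j \<omega>) (g \<omega>)) \<in> measurable M (count_space (Pow {..<m}))"
    by (rule meas_loop[OF X Cons.prems])
  from Cons.IH[OF this] show ?case by simp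
qed

lemma meas_A:
  fixes X :: "nat \<Rightarrow> nat \<Rightarrow> 'a \<Rightarrow> real" and m :: nat
  assumes X: "\<And>i j. X i j \<in> borel_measurable M"
  shows "(\<lambda>\<omega>. {j. j < m \<and> X i j \<omega> \<ge> \<tau>}) \<in> measurable M (count_space (Pow {..<m}))"
proof -
  have "(\<lambda>\<omega>. {j\<in>{..<m}. X i j \<omega> \<ge> \<tau>}) \<in> measurable M (count_space (Pow {..<m}))"
    by (rule meas_setfun) (use X in measurable)
  moreover have "{j\<in>{..<m}. X i j \<omega> \<ge> \<tau>} = {j. j < m \<and> X i j \<omega> \<ge> \<tau>}" for \<omega> by auto
  ultimately show ?thesis by simp
qed

lemma meas_Mstar:
  fixes X :: "nat \<Rightarrow> nat \<Rightarrow> 'a \<Rightarrow> real" and m :: nat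
  assumes X: "\<And>i j. X i j \<in> borel_measurable M"
  shows "(\<lambda>\<omega>. M_star n m r \<tau> (\<lambda>i j. X i j \<omega>) i) \<in> measurable M (count_space (Pow {..<m}))"
  unfolding M_star_def by (rule meas_foldl[OF X meas_A[OF X]])

lemma meas_diff:
  fixes m :: nat
  assumes A: "A \<in> measurable M (count_space (Pow {..<m}))" and B: "B \<in> measurable M (count_space (Pow {..<m}))"
  shows "(\<lambda>\<omega>. A \<omega> - B \<omega>) \<in> measurable M (count_space (Pow {..<m}))"
proof -
  have "(\<lambda>\<omega>. (\<lambda>T \<omega>. T - B \<omega>) (A \<omega>) \<omega>) \<in> measurable M (count_space (Pow {..<m}))"
  proof (rule measurable_compose_countable'[OF _ A])
    fix T assume T: "T \<in> Pow {..<m}"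
    have "(\<lambda>S. T - S) \<in> measurable (count_space (Pow {..<m})) (count_space (Pow {..<m}))"
      using T by (auto simp: measurable_count_space_eq1)
    then show "(\<lambda>\<omega>. T - B \<omega>) \<in> measurable M (count_space (Pow {..<m}))"
      using measurable_compose[OF B] by blast
  qed (auto intro: countable_finite)
  then show ?thesis by simp
qed

lemma meas_target:
  fixes X :: "nat \<Rightarrow> nat \<Rightarrow> 'a \<Rightarrow> real" and m :: nat
  assumes X: "\<And>i j. X i j \<in> borel_measurable M"
  shows "{\<omega> \<in> space M. max_degree_le n m (E_ge n m \<tau> (\<lambda>i j. X i j \<omega>) - E_star n m r \<tau> (\<lambda>i j. X i j \<omega>)) 2} \<in> sets M"
proof -
  define Y where "Y = PiE {..<n} (\<lambda>_. Pow {..<m})"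
  define Di where "Di i \<omega> = {j. j < m \<and> X i j \<omega> \<ge> \<tau>} - M_star n m r \<tau> (\<lambda>i j. X i j \<omega>) i" for i \<omega>
  define Dfun where "Dfun \<omega> = (\<lambda>i\<in>{..<n}. Di i \<omega>)" for \<omega>
  have Dim: "(\<lambda>\<omega>. Di i \<omega>) \<in> measurable M (count_space (Pow {..<m}))" for i
    unfolding Di_def by (rule meas_diff[OF meas_A[OF X] meas_Mstar[OF X]])
  have finY: "finite Y" unfolding Y_def by (simp add: finite_PiE)
  have Dfm: "Dfun \<in> measurable M (count_space Y)"
  proof (subst measurable_count_space_eq2[OF finY], intro conjI ballI)
    show "Dfun \<in> space M \<rightarrow> Y" unfolding Dfun_def Y_def Di_def by auto
    fix d assume d: "d \<in> Y"
    have "Dfun -` {d} \<inter> space M = {\<omega> \<in> space M. \<forall>i\<in>{..<n}. Di i \<omega> \<in> {d i} \<inter> Pow {..<m}}"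
      using d unfolding Y_def Dfun_def by (auto simp: PiE_iff extensional_def fun_eq_iff Di_def)
    also have "\<dots> \<in> sets M"
    proof -
      have "\<And>i. Measurable.pred M (\<lambda>\<omega>. Di i \<omega> \<in> {d i} \<inter> Pow {..<m})"
        by (rule pred_sets2[OF _ Dim]) simp
      then show ?thesis by measurable
    qed
    finally show "Dfun -` {d} \<inter> space M \<in> sets M" .
  qed
  define \<Phi> where "\<Phi> d \<longleftrightarrow> (\<forall>i<n. card (d i) \<le> 2) \<and> (\<forall>j<m. card {i. i < n \<and> j \<in> d i} \<le> (2::nat))" for d :: "nat \<Rightarrow> nat set"
  have eq: "max_degree_le n m (E_ge n m \<tau> (\<lambda>i j. X i j \<omega>) - E_star n m r \<tau> (\<lambda>i j. X i j \<omega>)) 2 \<longleftrightarrow> \<Phi> (Dfun \<omega>)" for \<omega>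
  proof -
    have 1: "{j. j < m \<and> (i, j) \<in> E_ge n m \<tau> (\<lambda>i j. X i j \<omega>) - E_star n m r \<tau> (\<lambda>i j. X i j \<omega>)} = Dfun \<omega> i"
      if "i < n" for i using that by (auto simp: Dfun_def Di_def E_ge_def E_star_def)
    have 2: "{i. i < n \<and> (i, j) \<in> E_ge n m \<tau> (\<lambda>i j. X i j \<omega>) - E_star n m r \<tau> (\<lambda>i j. X i j \<omega>)} = {i. i < n \<and> j \<in> Dfun \<omega> i}"
      if "j < m" for j using that by (auto simp: Dfun_def Di_def E_ge_def E_star_def)
    show ?thesis unfolding max_degree_le_def \<Phi>_def using 1 2 by simp
  qed
  have "{\<omega> \<in> space M. \<Phi> (Dfun \<omega>)} = Dfun -` {d \<in> Y. \<Phi> d} \<inter> space M"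
    using measurable_space[OF Dfm] by auto
  also have "\<dots> \<in> sets M" by (rule measurable_sets[OF Dfm]) simp
  finally show ?thesis unfolding eq .
qed

lemma pow_div_fact_le_exp:
  fixes k :: nat
  shows "real k ^ k / fact k \<le> exp (real k)"
proof -
  have s: "summable (\<lambda>n. real k ^ n /\<^sub>R fact n)" using exp_converges[of "real k"] sums_summable by blast
  have "sum (\<lambda>n. real k ^ n /\<^sub>R fact n) {k} \<le> suminf (\<lambda>n. real k ^ n /\<^sub>R fact n)"
    by (rule sum_le_suminf[OF s]) simp_all
  also have "suminf (\<lambda>n. real k ^ n /\<^sub>R fact n) = exp (real k)"
    using exp_converges[of "real k"] by (rule sums_unique[symmetric])
  finally have "real k ^ k /\<^sub>R fact k \<le> exp (real k)" by simp
  then show ?thesis by (simp add: divide_inverse_commute)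
qed

lemma choose_fact_le: "real (m choose k) \<le> real m ^ k / fact k"
proof (cases "k \<le> m")
  case True
  have eq: "fact m = (fact k * (m choose k)) * fact (m - k)"
    using binomial_fact_lemma[OF True] by (simp only: mult.commute mult.left_commute)
  have "fact k * (m choose k) = fact m div fact (m - k)"
    unfolding eq by (rule nonzero_mult_div_cancel_right[symmetric]) simp
  also have "\<dots> \<le> m ^ k" by (rule fact_div_fact_le_pow[OF True])
  finally have "fact k * (m choose k) \<le> m ^ k" .
  then have "real (fact k * (m choose k)) \<le> real (m ^ k)" by (simp only: of_nat_le_iff)
  then have "fact k * real (m choose k) \<le> real m ^ k" by simp
  then show ?thesis by (simp add: field_simps)
next
  case False
  then have "m choose k = 0" by (simp add: binomial_eq_0)
  then have "real (m choose k) = 0" by (simp only: of_nat_0)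
  moreover have "0 \<le> real m ^ k / fact k" by simp
  ultimately show ?thesis by linarith
qed

lemma term0_bound:
  fixes n m k :: nat and \<rho> B :: real
  assumes n: "n \<ge> 1" and m: "real m \<le> 4 * real k * real n" and k: "k \<ge> 3"
    and \<rho>: "0 \<le> \<rho>" "\<rho> \<le> B / real n" and B: "0 \<le> B" and x: "4 * exp 1 * B^2 / real n \<le> 1"
  shows "real (n * n * (m choose k)) * \<rho> ^ (2 * k) \<le> 64 * exp 3 * B^6 / real n"
proof -
  define N where "N = real n"
  define t where "t = B^2 / N"
  define x where "x = 4 * exp 1 * t"
  have npos: "N > 0" using n by (simp add: N_def)
  have t0: "0 \<le> t" using B npos by (simp add: t_def)
  have x0: "0 \<le> x" using t0 by (simp add: x_def)
  have x1: "x \<le> 1" using x by (simp add: x_def t_def N_def mult.assoc)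
  have "real (m choose k) * \<rho> ^ (2 * k) \<le> (real m ^ k / fact k) * (B / N) ^ (2 * k)"
    by (intro mult_mono choose_fact_le power_mono) (use \<rho> in \<open>auto simp: N_def\<close>)
  also have "\<dots> \<le> ((4 * real k * N) ^ k / fact k) * (B / N) ^ (2 * k)"
    by (intro mult_right_mono divide_right_mono power_mono) (use m B npos in \<open>auto simp: N_def\<close>)
  also have "\<dots> = (4 * t) ^ k * (real k ^ k / fact k)"
  proof -
    have e1: "(B / N) ^ (2*k) = t ^ k * (1 / N) ^ k"
    proof -
      have "(B / N) ^ (2*k) = ((B / N)^2)^k" by (simp only: power_mult)
      also have "(B / N)^2 = t * (1 / N)" by (simp add: t_def power2_eq_square)
      finally show ?thesis by (simp only: power_mult_distrib)
    qed
    have e2: "(4 * real k * N) ^ k = (4 * real k) ^ k * N ^ k" by (simp only: power_mult_distrib)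
    have e3: "N ^ k * (1 / N) ^ k = 1" using npos by (simp add: power_one_over)
    have e4: "(4 * real k) ^ k * t ^ k = (4 * t) ^ k * real k ^ k" by (simp only: power_mult_distrib mult_ac)
    have "((4 * real k * N) ^ k / fact k) * (B / N) ^ (2 * k)
        = ((4 * real k) ^ k * t ^ k) * (N ^ k * (1 / N) ^ k) / fact k"
      unfolding e1 e2 by (simp add: divide_inverse mult_ac)
    also have "\<dots> = ((4 * t) ^ k * real k ^ k) / fact k" unfolding e3 e4 by simp
    finally show ?thesis by simp
  qed
  also have "\<dots> \<le> (4 * t) ^ k * exp (real k)"
    by (intro mult_left_mono pow_div_fact_le_exp) (use t0 in auto)
  also have "\<dots> = x ^ k"
  proof -
    have "exp (real k) = exp 1 ^ k" using exp_of_nat_mult[of k 1] by simp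
    then show ?thesis by (simp add: x_def power_mult_distrib mult_ac)
  qed
  also have "\<dots> \<le> x ^ 3" by (rule power_decreasing[OF k x0 x1])
  finally have A: "real (m choose k) * \<rho> ^ (2 * k) \<le> x ^ 3" unfolding N_def .
  have "real (n * n * (m choose k)) * \<rho> ^ (2 * k) = N * N * (real (m choose k) * \<rho> ^ (2 * k))"
    by (simp add: N_def)
  also have "\<dots> \<le> N * N * x ^ 3" by (rule mult_left_mono[OF A]) (simp add: N_def)
  also have "\<dots> = 64 * exp 3 * B^6 / N"
  proof -
    have e: "exp (1::real) ^ 3 = exp 3" using exp_of_nat_mult[of 3 "1::real"] by simp
    have "N * N * x ^ 3 = 64 * exp 1 ^ 3 * (B^2)^3 * (N * N / N^3)"
      by (simp add: x_def t_def power_mult_distrib power_divide)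
    also have "N * N / N^3 = 1 / N" using npos by (simp add: power3_eq_cube)
    also have "(B^2)^3 = B^6" by (simp add: power_mult[symmetric])
    finally show ?thesis unfolding e by simp
  qed
  finally show ?thesis by (simp add: N_def)
qed

lemma term_bound:
  fixes n m a b s :: nat and \<rho> B :: real
  assumes n: "n \<ge> 1" and m: "m \<le> 3 * n" and \<rho>: "0 \<le> \<rho>" "\<rho> \<le> B / real n" and B: "0 \<le> B"
    and s: "a + b < s" "s \<le> 8"
  shows "real (n^a * m^b) * \<rho> ^ s \<le> 3^b * (1 + B)^8 / real n"
proof -
  have npos: "real n > 0" using n by simp
  have mm: "real m \<le> 3 * real n" using m by linarith
  have "real (n^a * m^b) \<le> real n ^ a * (3 * real n) ^ b"
    unfolding of_nat_mult of_nat_power by (intro mult_left_mono power_mono) (use mm in auto)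
  then have "real (n^a * m^b) * \<rho> ^ s \<le> (real n ^ a * (3 * real n) ^ b) * (B / real n) ^ s"
    by (intro mult_mono power_mono) (use \<rho> in auto)
  also have "\<dots> = 3^b * B^s * (real n ^ (a + b) / real n ^ s)"
    by (simp add: power_mult_distrib power_divide power_add)
  also have "real n ^ (a + b) / real n ^ s = 1 / real n ^ (s - (a + b))"
    using npos s by (simp add: power_diff)
  also have "1 / real n ^ (s - (a + b)) \<le> 1 / real n"
  proof -
    have "real n ^ 1 \<le> real n ^ (s - (a + b))" by (rule power_increasing) (use s n in auto)
    then show ?thesis using npos by (simp add: frac_le)
  qed
  then have "3^b * B^s * (1 / real n ^ (s - (a + b))) \<le> 3^b * B^s * (1 / real n)"
    by (intro mult_left_mono) (use B in auto)
  also have "B^s \<le> (1 + B)^8"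
  proof -
    have "B^s \<le> (1 + B)^s" by (rule power_mono) (use B in auto)
    also have "\<dots> \<le> (1 + B)^8" by (rule power_increasing) (use s B in auto)
    finally show ?thesis .
  qed
  then have "3^b * B^s * (1 / real n) \<le> 3^b * (1 + B)^8 * (1 / real n)"
    by (intro mult_right_mono mult_left_mono) (use npos in auto)
  finally show ?thesis by simp
qed

lemma W_bound:
  assumes n: "n \<ge> 1"
  shows "1 + real n powr 0.1 + ln (real n) \<le> 12 * real n powr 0.1"
proof -
  have "1 \<le> real n powr 0.1" by (rule ge_one_powr_ge_zero) (use n in auto)
  moreover have "ln (real n) \<le> real n powr 0.1 / 0.1" by (rule ln_powr_bound) (use n in auto)
  ultimately show ?thesis by simp
qed

lemma W_pow_lim:
  fixes k :: nat
  assumes k: "k \<le> 9"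
  shows "(\<lambda>n::nat. (1 + real n powr 0.1 + ln (real n)) ^ k / real n) \<longlonglongrightarrow> 0"
proof (rule tendsto_sandwich[of "\<lambda>_. 0" _ _ "\<lambda>n. 12 ^ k * real n powr (0.1 * real k - 1)"])
  show "\<forall>\<^sub>F n in sequentially. 0 \<le> (1 + real n powr 0.1 + ln (real n)) ^ k / real n"
    using eventually_ge_at_top[of "1::nat"] by eventually_elim (auto intro!: divide_nonneg_nonneg zero_le_power)
  show "\<forall>\<^sub>F n in sequentially. (1 + real n powr 0.1 + ln (real n)) ^ k / real n \<le> 12 ^ k * real n powr (0.1 * real k - 1)"
    using eventually_ge_at_top[of "1::nat"]
  proof eventually_elim
    case (elim n)
    have npos: "real n > 0" using elim by simp
    have W0: "0 \<le> 1 + real n powr 0.1 + ln (real n)" using elim by (auto intro!: add_nonneg_nonneg)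
    have "(1 + real n powr 0.1 + ln (real n)) ^ k \<le> (12 * real n powr 0.1) ^ k"
      by (rule power_mono[OF W_bound[OF elim] W0])
    also have "\<dots> = 12 ^ k * real n powr (0.1 * real k)"
      using npos by (simp add: power_mult_distrib powr_power mult.commute)
    finally have "(1 + real n powr 0.1 + ln (real n)) ^ k / real n \<le> 12 ^ k * real n powr (0.1 * real k) / real n"
      by (rule divide_right_mono) simp
    also have "\<dots> = 12 ^ k * real n powr (0.1 * real k - 1)"
      using npos by (simp add: powr_diff)
    finally show ?case .
  qed
  have "(\<lambda>n::nat. real n powr (0.1 * real k - 1)) \<longlonglongrightarrow> 0"
    by (rule tendsto_neg_powr) (use k in \<open>auto intro: filterlim_real_sequentially\<close>)
  then show "(\<lambda>n::nat. 12 ^ k * real n powr (0.1 * real k - 1)) \<longlonglongrightarrow> 0"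
    using tendsto_mult_right_zero by blast
qed simp

theorem lemma2:
  fixes U :: "real measure" and \<theta>l \<theta>u q :: real and r :: "nat \<Rightarrow> nat"
  assumes U_prob: "prob_space U" and U_borel: "sets U = sets borel"
    and U_supp: "measure U {0..1} = 1"
    and below: "poly_bounded_below U \<theta>l q" and above: "poly_bounded_above U \<theta>u q"
    and pos: "\<theta>l > 0" "\<theta>u > 0" "q > 0"
    and r_bounds: "eventually (\<lambda>n. 2 \<le> r n \<and> real (r n) \<le> exp (real n powr 0.1)) sequentially"
  shows "(\<lambda>n. let m = r n * n;
                 \<tau> = 1 - (64 * ln (real m) / (\<theta>l * real n)) powr (1 / q);
                 P = Pi\<^sub>M ({..<n} \<times> {..<m}) (\<lambda>_. U)
             in measure P {\<omega> \<in> space P.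
                  max_degree_le n m
                    (E_ge n m \<tau> (\<lambda>i j. \<omega> (i, j)) - E_star n m (r n) \<tau> (\<lambda>i j. \<omega> (i, j))) 2})
         \<longlonglongrightarrow> 1"
proof -
  interpret U: prob_space U by (rule U_prob)
  have Ugt1: "measure U {1<..} = 0"
  proof -
    have "measure U ({0..1} \<union> {1<..}) = measure U {0..1} + measure U {1<..}"
      by (rule U.finite_measure_Union) (use U_borel in auto)
    moreover have "measure U ({0..1} \<union> {1<..}) \<le> 1" by (rule U.prob_le_1)
    ultimately show ?thesis using U_supp measure_nonneg[of U "{1<..}"] by linarith
  qed
  define K where "K = \<theta>u * 2 powr q * 64 / \<theta>l"
  have K0: "K \<ge> 0" using pos by (simp add: K_def)
  define W where "W n = 1 + real n powr 0.1 + ln (real n)" for n :: nat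
  define g where "g n = (64 * exp 3 + 153) * (1 + K)^8 * (W n ^ 8 / real n)" for n :: nat
  define f where "f n = (let m = r n * n;
                 \<tau> = 1 - (64 * ln (real m) / (\<theta>l * real n)) powr (1 / q);
                 P = Pi\<^sub>M ({..<n} \<times> {..<m}) (\<lambda>_. U)
             in measure P {\<omega> \<in> space P.
                  max_degree_le n m
                    (E_ge n m \<tau> (\<lambda>i j. \<omega> (i, j)) - E_star n m (r n) \<tau> (\<lambda>i j. \<omega> (i, j))) 2})" for n
  have g0: "g \<longlonglongrightarrow> 0"
  proof -
    have "(\<lambda>n. W n ^ 8 / real n) \<longlonglongrightarrow> 0" unfolding W_def by (rule W_pow_lim) simp
    then show ?thesis unfolding g_def by (rule tendsto_mult_right_zero)
  qed
  have f1: "f n \<le> 1" for n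
  proof -
    have "prob_space (Pi\<^sub>M ({..<n} \<times> {..<r n * n}) (\<lambda>_. U))" by (rule prob_space_PiM) (use U_prob in auto)
    then show ?thesis unfolding f_def Let_def by (rule prob_space.prob_le_1)
  qed
  have ev1: "eventually (\<lambda>n. W n / real n < (1/16) powr q * \<theta>l / 64) sequentially"
  proof -
    have "(\<lambda>n. W n ^ 1 / real n) \<longlonglongrightarrow> 0" unfolding W_def by (rule W_pow_lim) simp
    then have "(\<lambda>n. W n / real n) \<longlonglongrightarrow> 0" by simp
    moreover have "0 < (1/16) powr q * \<theta>l / 64" using pos by simp
    ultimately show ?thesis by (rule order_tendstoD(2))
  qed
  have ev2: "eventually (\<lambda>n. W n ^ 2 / real n < 1 / (4 * exp 1 * (K + 1)^2)) sequentially"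
  proof -
    have "(\<lambda>n. W n ^ 2 / real n) \<longlonglongrightarrow> 0" unfolding W_def by (rule W_pow_lim) simp
    then show ?thesis by (rule order_tendstoD(2)) (use K0 in \<open>auto intro!: divide_pos_pos\<close>)
  qed
  have main: "eventually (\<lambda>n. 1 - g n \<le> f n) sequentially"
    using r_bounds ev1 ev2 eventually_ge_at_top[of "1::nat"]
  proof eventually_elim
    case (elim n)
    have r2: "2 \<le> r n" and rexp: "real (r n) \<le> exp (real n powr 0.1)" using elim(1) by auto
    have n1: "n \<ge> 1" using elim(4) .
    have npos: "real n > 0" using n1 by simp
    define mm where "mm = r n * n"
    define L where "L = ln (real mm)"
    define \<alpha> where "\<alpha> = (64 * L / (\<theta>l * real n)) powr (1/q)"
    define \<rho> where "\<rho> = measure U {1 - 2*\<alpha><..}"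
    define B where "B = K * L"
    have mm2: "real mm \<ge> 2" using r2 n1 unfolding mm_def
      by (metis mult_le_mono nat_mult_1_right of_nat_le_iff of_nat_numeral)
    have L0: "L > 0" using mm2 unfolding L_def by simp
    have lnr: "ln (real (r n)) \<le> real n powr 0.1"
    proof -
      have "ln (real (r n)) \<le> ln (exp (real n powr 0.1))" using rexp r2 by (subst ln_le_cancel_iff) auto
      then show ?thesis by simp
    qed
    have LW: "L \<le> W n"
    proof -
      have "L = ln (real (r n)) + ln (real n)" unfolding L_def mm_def using r2 npos by (simp add: ln_mult)
      then show ?thesis unfolding W_def using lnr by simp
    qed
    have W1: "1 \<le> W n" unfolding W_def using n1 by simp
    have base0: "0 < 64 * L / (\<theta>l * real n)" using L0 pos npos by simp
    have base_le: "64 * L / (\<theta>l * real n) \<le> (1/16) powr q"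
    proof -
      have "64 * L / (\<theta>l * real n) \<le> 64 * W n / (\<theta>l * real n)"
        using LW pos npos by (intro divide_right_mono) auto
      also have "\<dots> = (64 / \<theta>l) * (W n / real n)" by simp
      also have "\<dots> \<le> (64 / \<theta>l) * ((1/16) powr q * \<theta>l / 64)"
        using elim(2) pos by (intro mult_left_mono) auto
      also have "\<dots> = (1/16) powr q" using pos by simp
      finally show ?thesis .
    qed
    have a0: "0 < \<alpha>" unfolding \<alpha>_def using base0 L0 pos n1 by simp
    have a1: "\<alpha> \<le> 1/16"
    proof -
      have "\<alpha> \<le> ((1/16) powr q) powr (1/q)" unfolding \<alpha>_def
        by (rule powr_mono2) (use base0 base_le pos in auto)
      also have "\<dots> = 1/16" using pos by (simp add: powr_powr)
      finally show ?thesis .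
    qed
    have \<alpha>q: "\<alpha> powr q = 64 * L / (\<theta>l * real n)"
      unfolding \<alpha>_def using base0 pos L0 by (simp add: powr_powr)
    have \<rho>B: "\<rho> \<le> B / real n"
    proof -
      have "\<rho> \<le> \<theta>u * (2 * \<alpha>) powr q"
        using above a0 a1 unfolding poly_bounded_above_def \<rho>_def by auto
      also have "(2 * \<alpha>) powr q = 2 powr q * \<alpha> powr q" using a0 by (simp add: powr_mult)
      also have "\<theta>u * (2 powr q * \<alpha> powr q) = B / real n"
        unfolding \<alpha>q B_def K_def using pos npos by (simp add: field_simps)
      finally show ?thesis .
    qed
    have \<rho>0: "0 \<le> \<rho>" unfolding \<rho>_def by simp
    have B0: "0 \<le> B" unfolding B_def using K0 L0 by simp
    have BW: "B \<le> (K + 1) * W n" unfolding B_def using K0 LW W1 L0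
      by (smt (verit) mult_left_mono mult_right_mono)
    have xcond: "4 * exp 1 * B^2 / real n \<le> 1"
    proof -
      have "B^2 \<le> ((K + 1) * W n)^2" by (rule power_mono[OF BW B0])
      then have "4 * exp 1 * B^2 / real n \<le> 4 * exp 1 * ((K + 1) * W n)^2 / real n"
        using npos by (intro divide_right_mono mult_left_mono) auto
      also have "\<dots> = (4 * exp 1 * (K + 1)^2) * (W n ^ 2 / real n)" by (simp add: power_mult_distrib)
      also have "\<dots> \<le> (4 * exp 1 * (K + 1)^2) * (1 / (4 * exp 1 * (K + 1)^2))"
        using elim(3) K0 by (intro mult_left_mono) auto
      also have "\<dots> = 1" using K0 by simp
      finally show ?thesis .
    qed
    have Xm: "\<And>i j. (\<lambda>\<omega>. \<omega> (i, j)) \<in> borel_measurable (Pi\<^sub>M ({..<n} \<times> {..<mm}) (\<lambda>_. U))"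
    proof -
      fix i j
      show "(\<lambda>\<omega>. \<omega> (i, j)) \<in> borel_measurable (Pi\<^sub>M ({..<n} \<times> {..<mm}) (\<lambda>_. U))"
      proof (cases "(i, j) \<in> {..<n} \<times> {..<mm}")
        case True
        have "(\<lambda>\<omega>. \<omega> (i, j)) \<in> measurable (Pi\<^sub>M ({..<n} \<times> {..<mm}) (\<lambda>_. U)) U"
          by (rule measurable_component_singleton[OF True])
        moreover have "measurable (Pi\<^sub>M ({..<n} \<times> {..<mm}) (\<lambda>_. U)) U = borel_measurable (Pi\<^sub>M ({..<n} \<times> {..<mm}) (\<lambda>_. U))"
          by (rule measurable_cong_sets[OF refl U_borel])
        ultimately show ?thesis by simp
      next
        case False
        have "(\<lambda>\<omega>. undefined) \<in> borel_measurable (Pi\<^sub>M ({..<n} \<times> {..<mm}) (\<lambda>_. U))" by simp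
        moreover have und: "\<omega> (i, j) = undefined" if "\<omega> \<in> space (Pi\<^sub>M ({..<n} \<times> {..<mm}) (\<lambda>_. U))" for \<omega>
          using that False by (auto simp: space_PiM PiE_def extensional_def)
        ultimately show ?thesis
          using measurable_cong[of "Pi\<^sub>M ({..<n} \<times> {..<mm}) (\<lambda>_. U)" "\<lambda>\<omega>. \<omega> (i, j)" "\<lambda>\<omega>. undefined" borel]
          by blast
      qed
    qed
    have meas: "{\<omega> \<in> space (Pi\<^sub>M ({..<n}\<times>{..<mm}) (\<lambda>_. U)). max_degree_le n mm
        (E_ge n mm (1 - \<alpha>) (\<lambda>i j. \<omega> (i, j)) - E_star n mm (r n) (1 - \<alpha>) (\<lambda>i j. \<omega> (i, j))) 2}
        \<in> sets (Pi\<^sub>M ({..<n}\<times>{..<mm}) (\<lambda>_. U))"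
      by (rule meas_target[where X = "\<lambda>i j \<omega>. \<omega> (i, j)", OF Xm])
    note bb = bad_bound[OF U_prob U_borel Ugt1 a0 a1 r2 meas, folded \<rho>_def]
    define T where "T = real (n * n * (mm choose k0 (r n))) * \<rho> ^ (2 * k0 (r n))
          + (if r n \<le> 3 then real (n^3*mm^2) * \<rho> ^ 6 + real (n^3*mm^3) * \<rho> ^ 7
               + real (n^3*mm^4) * \<rho> ^ 8 + real (n^4*mm^3) * \<rho> ^ 8
               + real (n^4*mm^2) * \<rho> ^ 8 else 0)"
    have T: "T \<le> (64 * exp 3 + 153) * (1 + B)^8 / real n"
    proof -
      have k3: "k0 (r n) \<ge> 3" by (simp add: k0_def)
      have rk: "real mm \<le> 4 * real (k0 (r n)) * real n"
      proof -
        have "r n \<le> 4 * (r n div 4 + 1)" by presburger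
        also have "\<dots> \<le> 4 * k0 (r n)" unfolding k0_def by simp
        finally have "r n \<le> 4 * k0 (r n)" .
        then have "real (r n) \<le> 4 * real (k0 (r n))" by linarith
        then show ?thesis unfolding mm_def using npos by (simp add: mult_right_mono)
      qed
      have t0: "real (n * n * (mm choose k0 (r n))) * \<rho> ^ (2 * k0 (r n)) \<le> 64 * exp 3 * B^6 / real n"
        by (rule term0_bound[OF n1 rk k3 \<rho>0 \<rho>B B0 xcond])
      have "B^6 \<le> (1 + B)^8"
      proof -
        have "B^6 \<le> (1 + B)^6" by (rule power_mono) (use B0 in auto)
        also have "\<dots> \<le> (1 + B)^8" by (rule power_increasing) (use B0 in auto)
        finally show ?thesis .
      qed
      then have t0': "real (n * n * (mm choose k0 (r n))) * \<rho> ^ (2 * k0 (r n)) \<le> 64 * exp 3 * (1 + B)^8 / real n"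
        using t0 npos by (smt (verit) divide_right_mono exp_gt_zero mult_left_mono)
      show ?thesis
      proof (cases "r n \<le> 3")
        case True
        have m3: "mm \<le> 3 * n" unfolding mm_def using True by simp
        have a: "real (n^3*mm^2) * \<rho> ^ 6 \<le> 3^2 * (1 + B)^8 / real n" by (rule term_bound[OF n1 m3 \<rho>0 \<rho>B B0]) auto
        have b: "real (n^3*mm^3) * \<rho> ^ 7 \<le> 3^3 * (1 + B)^8 / real n" by (rule term_bound[OF n1 m3 \<rho>0 \<rho>B B0]) auto
        have c: "real (n^3*mm^4) * \<rho> ^ 8 \<le> 3^4 * (1 + B)^8 / real n" by (rule term_bound[OF n1 m3 \<rho>0 \<rho>B B0]) auto
        have d: "real (n^4*mm^3) * \<rho> ^ 8 \<le> 3^3 * (1 + B)^8 / real n" by (rule term_bound[OF n1 m3 \<rho>0 \<rho>B B0]) auto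
        have e: "real (n^4*mm^2) * \<rho> ^ 8 \<le> 3^2 * (1 + B)^8 / real n" by (rule term_bound[OF n1 m3 \<rho>0 \<rho>B B0]) auto
        have "T \<le> 64 * exp 3 * (1 + B)^8 / real n + (9 + 27 + 81 + 27 + 9) * (1 + B)^8 / real n"
          unfolding T_def using True t0' a b c d e by (simp add: add_divide_distrib ring_distribs)
        also have "\<dots> = (64 * exp 3 + 153) * (1 + B)^8 / real n" by (simp add: add_divide_distrib algebra_simps)
        finally show ?thesis .
      next
        case False
        have "T \<le> 64 * exp 3 * (1 + B)^8 / real n" unfolding T_def using False t0' by simp
        also have "\<dots> \<le> (64 * exp 3 + 153) * (1 + B)^8 / real n"
          using npos by (intro divide_right_mono mult_right_mono) auto
        finally show ?thesis .
      qed
    qed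
    have KLW: "K * L \<le> K * W n" by (rule mult_left_mono[OF LW K0])
    have "1 + B \<le> (1 + K) * W n" using KLW W1 unfolding B_def by (simp add: algebra_simps)
    then have "(1 + B)^8 \<le> ((1 + K) * W n)^8"
      by (rule power_mono) (use B0 in simp)
    then have "(64 * exp 3 + 153) * (1 + B)^8 / real n \<le> (64 * exp 3 + 153) * ((1 + K) * W n)^8 / real n"
      using npos by (intro divide_right_mono mult_left_mono) auto
    also have "\<dots> = g n" unfolding g_def by (simp add: power_mult_distrib)
    finally have Tg: "T \<le> g n" using T by linarith
    have "f n = measure (Pi\<^sub>M ({..<n}\<times>{..<mm}) (\<lambda>_. U)) {\<omega> \<in> space (Pi\<^sub>M ({..<n}\<times>{..<mm}) (\<lambda>_. U)). max_degree_le n mm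
        (E_ge n mm (1 - \<alpha>) (\<lambda>i j. \<omega> (i, j)) - E_star n mm (r n) (1 - \<alpha>) (\<lambda>i j. \<omega> (i, j))) 2}"
      unfolding f_def Let_def \<alpha>_def L_def mm_def ..
    also have "\<dots> \<ge> 1 - T" using bb unfolding T_def .
    finally show ?case using Tg by linarith
  qed
  have "(\<lambda>n. 1 - g n) \<longlonglongrightarrow> 1 - 0" by (intro tendsto_diff tendsto_const g0)
  then have "f \<longlonglongrightarrow> 1"
    by (intro tendsto_sandwich[OF main _ _ tendsto_const]) (auto simp: f1)
  then show ?thesis unfolding f_def .
qed

end
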